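(* For every $n\ge1$ there is a bijection $\omega$ from the set of Schröder permutations in $\mathcal{S}_n$ to itself such that for all $k\ge3$ and every Schröder permutation $\pi\in\mathcal{S}_n$, $\pi$ avoids $12\cdots k$ if and only if $\omega(\pi)$ avoids $2\,1\,3\,4\cdots k$.
   Context: A permutation avoids $\tau\in\mathcal{S}_k$ if no subsequence of length $k$ is in the same relative order as $\tau$. A Schröder permutation is a permutation avoiding both $1243$ and $2143$. *)

theory Defs
  imports Main
begin

definition perms :: "nat \<Rightarrow> nat list set" where
  "perms n = {xs. distinct xs \<and> set xs = {1..n}}"

definition contains :: "nat list \<Rightarrow> nat list \<Rightarrow> bool" where
  "contains pi tau \<longleftrightarrow>
     (\<exists>is :: nat list. length is = length tau \<and> sorted_wrt (<) is \<and>
        (\<forall>j \<in> set is. j < length pi) \<and>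
        (\<forall>a < length tau. \<forall>b < length tau.
            (pi ! (is ! a) < pi ! (is ! b)) \<longleftrightarrow> (tau ! a < tau ! b)))"

definition avoids :: "nat list \<Rightarrow> nat list \<Rightarrow> bool" where
  "avoids pi tau \<longleftrightarrow> \<not> contains pi tau"

definition schroeder :: "nat \<Rightarrow> nat list set" where
  "schroeder n = {pi \<in> perms n. avoids pi [1,2,4,3] \<and> avoids pi [2,1,4,3]}"

definition incr_pat :: "nat \<Rightarrow> nat list" where
  "incr_pat k = [1..<k+1]"

definition swap12_pat :: "nat \<Rightarrow> nat list" where
  "swap12_pat k = [2,1] @ [3..<k+1]"

end

theory Submission
  imports Defs "HOL-Library.Sublist"
begin

lemma sorted_pred_map:
  "sorted_wrt (<) (js::nat list) \<Longrightarrow> \<forall>i\<in>set js. 0 < i \<Longrightarrow> sorted_wrt (<) (map (\<lambda>i. i - 1) js)"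
  by (induction js) auto

lemma idx_subseq:
  "sorted_wrt (<) is \<Longrightarrow> (\<forall>j\<in>set is. j < length xs) \<Longrightarrow> subseq (map (nth xs) is) xs"
proof (induction xs arbitrary: "is")
  case Nil
  then show ?case by (cases "is") auto
next
  case (Cons x xs)
  show ?case
  proof (cases "is")
    case Nil
    then show ?thesis by simp
  next
    case (Cons j js)
    have js_pos: "\<forall>i\<in>set js. 0 < i" using Cons \<open>sorted_wrt (<) is\<close> by auto
    have js_sorted: "sorted_wrt (<) js" using Cons \<open>sorted_wrt (<) is\<close> by auto
    have m1: "map (nth (x#xs)) js = map (nth xs) (map (\<lambda>i. i - 1) js)"
      using js_pos by (auto simp: nth_Cons')
    have s1: "sorted_wrt (<) (map (\<lambda>i. i - 1) js)"
      using js_sorted js_pos by (rule sorted_pred_map)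
    have b1: "\<forall>i\<in>set (map (\<lambda>i. i - 1) js). i < length xs"
      using Cons.prems(2) \<open>is = j # js\<close> js_pos by auto
    show ?thesis
    proof (cases "j = 0")
      case True
      have "subseq (map (nth xs) (map (\<lambda>i. i - 1) js)) xs" using Cons.IH s1 b1 by blast
      then have "subseq (x # map (nth xs) (map (\<lambda>i. i - 1) js)) (x # xs)" by (rule subseq_Cons2)
      then show ?thesis unfolding \<open>is = j # js\<close> True list.map nth_Cons_0 m1 .
    next
      case False
      have "map (nth (x#xs)) is = map (nth xs) (map (\<lambda>i. i - 1) is)"
        using \<open>is = j # js\<close> js_pos False by (auto simp: nth_Cons')
      moreover have "sorted_wrt (<) (map (\<lambda>i. i - 1) is)"
        using \<open>is = j # js\<close> js_pos False Cons.prems(1)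
        by (intro sorted_pred_map) auto
      moreover have "\<forall>i\<in>set (map (\<lambda>i. i - 1) is). i < length xs"
        using Cons.prems(2) \<open>is = j # js\<close> js_pos False by auto
      ultimately show ?thesis using Cons.IH by (metis list_emb_Cons)
    qed
  qed
qed

lemma subseq_idx:
  "subseq ys xs \<Longrightarrow> \<exists>is. sorted_wrt (<) is \<and> (\<forall>j\<in>set is. j < length xs) \<and> ys = map (nth xs) is"
proof (induction rule: list_emb.induct)
  case (list_emb_Nil ys)
  then show ?case by (intro exI[of _ "[]"]) auto
next
  case (list_emb_Cons xs ys y)
  then obtain "is" where "sorted_wrt (<) is" "\<forall>j\<in>set is. j < length ys" "xs = map (nth ys) is" by blast
  then show ?case
    by (intro exI[of _ "map Suc is"]) (auto simp: sorted_wrt_map)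
next
  case (list_emb_Cons2 x y xs ys)
  then obtain "is" where "sorted_wrt (<) is" "\<forall>j\<in>set is. j < length ys" "xs = map (nth ys) is" by blast
  then show ?case using \<open>x = y\<close>
    by (intro exI[of _ "0 # map Suc is"]) (auto simp: sorted_wrt_map)
qed

definition iso :: "nat list \<Rightarrow> nat list \<Rightarrow> bool" where
  "iso ys tau \<longleftrightarrow> length ys = length tau \<and>
     (\<forall>a < length tau. \<forall>b < length tau. (ys ! a < ys ! b) \<longleftrightarrow> (tau ! a < tau ! b))"

lemma contains_iff: "contains pi tau \<longleftrightarrow> (\<exists>ys. subseq ys pi \<and> iso ys tau)"
proof
  assume "contains pi tau"
  then obtain "is" where h: "length is = length tau" "sorted_wrt (<) is" "\<forall>j \<in> set is. j < length pi"
    "\<forall>a < length tau. \<forall>b < length tau. (pi ! (is ! a) < pi ! (is ! b)) \<longleftrightarrow> (tau ! a < tau ! b)"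
    unfolding contains_def by blast
  have "subseq (map (nth pi) is) pi" using idx_subseq h by blast
  moreover have "iso (map (nth pi) is) tau" using h by (auto simp: iso_def)
  ultimately show "\<exists>ys. subseq ys pi \<and> iso ys tau" by blast
next
  assume "\<exists>ys. subseq ys pi \<and> iso ys tau"
  then obtain ys where "subseq ys pi" "iso ys tau" by blast
  then obtain "is" where h: "sorted_wrt (<) is" "\<forall>j\<in>set is. j < length pi" "ys = map (nth pi) is"
    using subseq_idx by blast
  show "contains pi tau" unfolding contains_def
    using h \<open>iso ys tau\<close> by (intro exI[of _ "is"]) (auto simp: iso_def)
qed

lemma all4: "(\<forall>a<(4::nat). P a) \<longleftrightarrow> P 0 \<and> P 1 \<and> P 2 \<and> P 3"
proof -
  have "{a. a < (4::nat)} = {0,1,2,3}" by auto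
  then show ?thesis by (metis (mono_tags, lifting) insert_iff mem_Collect_eq singletonD)
qed

definition bad :: "nat list \<Rightarrow> bool" where
  "bad xs \<longleftrightarrow> (\<exists>x y c d. subseq [x,y,c,d] xs \<and> x < d \<and> y < d \<and> d < c \<and> x \<noteq> y)"

lemma len4: "length ys = 4 \<Longrightarrow> \<exists>x y c d. ys = [x,y,c,d]"
  by (cases ys; cases "tl ys"; cases "tl (tl ys)"; cases "tl (tl (tl ys))"; auto)

lemma schroeder_avoid_iff:
  "(avoids pi [1,2,4,3] \<and> avoids pi [2,1,4,3]) \<longleftrightarrow> \<not> bad pi"
proof -
  have "contains pi [1,2,4,3] \<or> contains pi [2,1,4,3] \<longleftrightarrow> bad pi"
  proof
    assume "contains pi [1,2,4,3] \<or> contains pi [2,1,4,3]"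
    then obtain ys where ys: "subseq ys pi" "iso ys [1,2,4,3] \<or> iso ys [2,1,4,3]"
      unfolding contains_iff by blast
    then have "length ys = 4" by (auto simp: iso_def)
    then obtain x y c d where yd: "ys = [x,y,c,d]" using len4 by blast
    obtain t where t: "t = [1,2,4,3] \<or> t = [2,1,4,3::nat]" "iso ys t" using ys by blast
    then have h: "\<forall>a<length t. \<forall>b<length t. (ys ! a < ys ! b) \<longleftrightarrow> (t ! a < t ! b)"
      unfolding iso_def by blast
    have lt: "length t = 4" using t by auto
    have "x < d" using h[rule_format, of 0 3] lt t yd by auto
    moreover have "y < d" using h[rule_format, of 1 3] lt t yd by auto
    moreover have "d < c" using h[rule_format, of 3 2] lt t yd by auto
    moreover have "x \<noteq> y" using h[rule_format, of 0 1] h[rule_format, of 1 0] lt t yd by auto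
    ultimately show "bad pi" unfolding bad_def using ys(1) yd by blast
  next
    assume "bad pi"
    then obtain x y c d where h: "subseq [x,y,c,d] pi" "x < d" "y < d" "d < c" "x \<noteq> y"
      unfolding bad_def by blast
    show "contains pi [1,2,4,3] \<or> contains pi [2,1,4,3]"
    proof (cases "x < y")
      case True
      then have "iso [x,y,c,d] [1,2,4,3]" using h unfolding iso_def by (auto simp: less_Suc_eq)
      then show ?thesis using h(1) unfolding contains_iff by blast
    next
      case False
      then have "iso [x,y,c,d] [2,1,4,3]" using h unfolding iso_def by (auto simp: less_Suc_eq)
      then show ?thesis using h(1) unfolding contains_iff by blast
    qed
  qed
  then show ?thesis unfolding avoids_def by blast
qed

lemma sorted_iff_nth_iff:
  "sorted_wrt (<) (zs::nat list) \<longleftrightarrow> (\<forall>a<length zs. \<forall>b<length zs. zs!a < zs!b \<longleftrightarrow> a < b)"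
proof
  assume s: "sorted_wrt (<) zs"
  show "\<forall>a<length zs. \<forall>b<length zs. zs!a < zs!b \<longleftrightarrow> a < b"
  proof (intro allI impI)
    fix a b assume ab: "a < length zs" "b < length zs"
    show "zs!a < zs!b \<longleftrightarrow> a < b"
    proof
      assume "zs!a < zs!b"
      show "a < b"
      proof (rule ccontr)
        assume "\<not> a < b"
        then have "b < a \<or> b = a" by auto
        then show False
        proof
          assume "b < a" then have "zs!b < zs!a" using s ab by (auto simp: sorted_wrt_iff_nth_less)
          then show False using \<open>zs!a < zs!b\<close> by simp
        next
          assume "b = a" then show False using \<open>zs!a < zs!b\<close> by simp
        qed
      qed
    next
      assume "a < b" then show "zs!a < zs!b" using s ab by (auto simp: sorted_wrt_iff_nth_less)
    qed
  qed
next
  assume "\<forall>a<length zs. \<forall>b<length zs. zs!a < zs!b \<longleftrightarrow> a < b"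
  then show "sorted_wrt (<) zs" by (auto simp: sorted_wrt_iff_nth_less)
qed

lemma iso_incr: "length ys = k \<Longrightarrow> iso ys (incr_pat k) \<longleftrightarrow> sorted_wrt (<) ys"
  unfolding iso_def incr_pat_def sorted_iff_nth_iff by (auto simp del: upt_Suc simp: nth_upt)

fun S2 :: "nat list \<Rightarrow> bool" where
  "S2 (a # b # r) = sorted_wrt (<) (b # a # r)"
| "S2 _ = False"

definition swi :: "nat \<Rightarrow> nat" where
  "swi a = (if a = 0 then 1 else if a = 1 then 0 else a)"

lemma swi_swi[simp]: "swi (swi a) = a" unfolding swi_def by auto

lemma swap_nth: "k \<ge> 2 \<Longrightarrow> a < k \<Longrightarrow> swap12_pat k ! a = swi a + 1"
  unfolding swap12_pat_def swi_def
  by (auto simp del: upt_Suc simp: nth_append nth_Cons' nth_upt)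

lemma swi_lt: "k \<ge> 2 \<Longrightarrow> a < k \<Longrightarrow> swi a < k"
  unfolding swi_def by auto

lemma iso_swap:
  assumes "length ys = k" "k \<ge> 2"
  shows "iso ys (swap12_pat k) \<longleftrightarrow> S2 ys"
proof -
  obtain y0 y1 r where ys: "ys = y0 # y1 # r"
    using assms by (cases ys; cases "tl ys"; auto)
  define zs where "zs = y1 # y0 # r"
  have lz: "length zs = k" using assms ys zs_def by simp
  have zs_nth: "zs ! a = ys ! (swi a)" for a
    unfolding zs_def ys swi_def by (cases a; cases "a - 1"; auto)
  have ys_nth: "ys ! a = zs ! (swi a)" for a
    using zs_nth[of "swi a"] by simp
  have len_sw: "length (swap12_pat k) = k" unfolding swap12_pat_def using assms by (simp del: upt_Suc)
  have "iso ys (swap12_pat k) \<longleftrightarrow> (\<forall>a<k. \<forall>b<k. ys!a < ys!b \<longleftrightarrow> swi a < swi b)"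
    unfolding iso_def len_sw using assms swap_nth by auto
  also have "\<dots> \<longleftrightarrow> (\<forall>a<k. \<forall>b<k. zs!a < zs!b \<longleftrightarrow> a < b)"
  proof
    assume h: "\<forall>a<k. \<forall>b<k. ys!a < ys!b \<longleftrightarrow> swi a < swi b"
    show "\<forall>a<k. \<forall>b<k. zs!a < zs!b \<longleftrightarrow> a < b"
    proof (intro allI impI)
      fix a b assume "a < k" "b < k"
      then have "swi a < k" "swi b < k" using swi_lt assms by auto
      then show "zs!a < zs!b \<longleftrightarrow> a < b" using h zs_nth by fastforce
    qed
  next
    assume h: "\<forall>a<k. \<forall>b<k. zs!a < zs!b \<longleftrightarrow> a < b"
    show "\<forall>a<k. \<forall>b<k. ys!a < ys!b \<longleftrightarrow> swi a < swi b"
    proof (intro allI impI)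
      fix a b assume "a < k" "b < k"
      then have "swi a < k" "swi b < k" using swi_lt assms by auto
      then show "ys!a < ys!b \<longleftrightarrow> swi a < swi b" using h ys_nth by fastforce
    qed
  qed
  also have "\<dots> \<longleftrightarrow> sorted_wrt (<) zs" using sorted_iff_nth_iff lz by simp
  finally show ?thesis using ys zs_def by simp
qed

definition inc :: "nat \<Rightarrow> nat list \<Rightarrow> bool" where
  "inc k xs \<longleftrightarrow> (\<exists>ys. subseq ys xs \<and> length ys = k \<and> sorted_wrt (<) ys)"

definition sw :: "nat \<Rightarrow> nat list \<Rightarrow> bool" where
  "sw k xs \<longleftrightarrow> (\<exists>ys. subseq ys xs \<and> length ys = k \<and> S2 ys)"

lemma contains_incr: "contains xs (incr_pat k) \<longleftrightarrow> inc k xs"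
proof -
  have l: "length (incr_pat k) = k" unfolding incr_pat_def by (simp del: upt_Suc)
  show ?thesis unfolding contains_iff inc_def
    using iso_incr l by (metis iso_def)
qed

lemma contains_swap: "k \<ge> 2 \<Longrightarrow> contains xs (swap12_pat k) \<longleftrightarrow> sw k xs"
proof -
  assume k: "k \<ge> 2"
  have l: "length (swap12_pat k) = k" unfolding swap12_pat_def using k by (simp del: upt_Suc)
  show ?thesis unfolding contains_iff sw_def
    using iso_swap[OF _ k] l by (metis iso_def)
qed

definition sch :: "nat list \<Rightarrow> bool" where
  "sch xs \<longleftrightarrow> distinct xs \<and> \<not> bad xs"

lemma subseq_set: "subseq ys xs \<Longrightarrow> set ys \<subseteq> set xs"
  by (induction rule: list_emb.induct) auto

lemma subseq_distinct: "subseq ys xs \<Longrightarrow> distinct xs \<Longrightarrow> distinct ys"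
  by (induction rule: list_emb.induct) (auto dest: subseq_set)

lemma subseq_sorted: "subseq ys xs \<Longrightarrow> sorted_wrt R xs \<Longrightarrow> sorted_wrt R ys"
  by (induction rule: list_emb.induct) (auto dest: subseq_set)

lemma bad_mono: "subseq ys xs \<Longrightarrow> bad ys \<Longrightarrow> bad xs"
  unfolding bad_def using subseq_order.order_trans by blast

lemma sch_subseq: "subseq ys xs \<Longrightarrow> sch xs \<Longrightarrow> sch ys"
  unfolding sch_def using subseq_distinct bad_mono by blast

lemma not_sorted_pair:
  "\<not> sorted_wrt R xs \<Longrightarrow> \<exists>x y. subseq [x,y] xs \<and> \<not> R x y"
proof (induction xs)
  case Nil
  then show ?case by simp
next
  case (Cons a xs)
  show ?case
  proof (cases "sorted_wrt R xs")
    case True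
    then obtain y where "y \<in> set xs" "\<not> R a y" using Cons.prems by auto
    then have "subseq [a,y] (a#xs)" by (simp add: subseq_singleton_left)
    then show ?thesis using \<open>\<not> R a y\<close> by blast
  next
    case False
    then obtain x y where "subseq [x,y] xs" "\<not> R x y" using Cons.IH by blast
    then show ?thesis by (meson list_emb_Cons)
  qed
qed

lemma two_elems:
  "x \<in> set l \<Longrightarrow> y \<in> set l \<Longrightarrow> x \<noteq> y \<Longrightarrow> subseq [x,y] l \<or> subseq [y,x] l"
proof (induction l)
  case Nil
  then show ?case by simp
next
  case (Cons a l)
  show ?case
  proof (cases "x = a")
    case True
    then have "y \<in> set l" using Cons.prems by auto
    then show ?thesis using True by (simp add: subseq_singleton_left)
  next
    case False
    show ?thesis
    proof (cases "y = a")
      case True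
      then have "x \<in> set l" using Cons.prems False by auto
      then show ?thesis using True by (simp add: subseq_singleton_left)
    next
      case False
      then have "subseq [x,y] l \<or> subseq [y,x] l" using Cons \<open>x \<noteq> a\<close> by auto
      then show ?thesis by (meson list_emb_Cons)
    qed
  qed
qed

lemma subseq_Cons_cases:
  "subseq ys (M # b) \<Longrightarrow> (\<exists>r. ys = M # r \<and> subseq r b) \<or> subseq ys b"
  by (cases ys) (auto split: if_splits)

lemma subseq_single_cases: "subseq ys [M] \<Longrightarrow> ys = [] \<or> ys = [M]"
  using subseq_Cons_cases[of ys M "[]"] by auto

lemma subseq_map_inv:
  "subseq ys (map f xs) \<Longrightarrow> \<exists>zs. subseq zs xs \<and> ys = map f zs"
proof (induction xs arbitrary: ys)
  case Nil
  then show ?case by auto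
next
  case (Cons x xs)
  from subseq_Cons_cases[OF Cons.prems[simplified]]
  show ?case
  proof
    assume "\<exists>r. ys = f x # r \<and> subseq r (map f xs)"
    then obtain r where "ys = f x # r" "subseq r (map f xs)" by blast
    then obtain zs where "subseq zs xs" "r = map f zs" using Cons.IH by blast
    then show ?thesis using \<open>ys = f x # r\<close> by (intro exI[of _ "x # zs"]) auto
  next
    assume "subseq ys (map f xs)"
    then obtain zs where "subseq zs xs" "ys = map f zs" using Cons.IH by blast
    then show ?thesis by (intro exI[of _ zs]) auto
  qed
qed

lemma subseq_mapE:
  assumes "subseq ys (map f xs)"
  obtains zs where "subseq zs xs" "ys = map f zs"
proof -
  from subseq_map_inv[OF assms] obtain zs where "subseq zs xs \<and> ys = map f zs" by (rule exE)
  then show ?thesis using that by (elim conjE)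
qed

definition omono :: "(nat \<Rightarrow> nat) \<Rightarrow> nat set \<Rightarrow> bool" where
  "omono f X \<longleftrightarrow> (\<forall>x\<in>X. \<forall>y\<in>X. x < y \<longleftrightarrow> f x < f y)"

lemma omono_subset: "omono f X \<Longrightarrow> Y \<subseteq> X \<Longrightarrow> omono f Y"
  unfolding omono_def by blast

lemma omono_sorted_lt: "omono f (set zs) \<Longrightarrow> sorted_wrt (<) (map f zs) \<longleftrightarrow> sorted_wrt (<) zs"
  unfolding omono_def by (induction zs) auto

lemma omono_sorted_gt: "omono f (set zs) \<Longrightarrow> sorted_wrt (>) (map f zs) \<longleftrightarrow> sorted_wrt (>) zs"
  unfolding omono_def by (induction zs) auto

lemma omono_S2: "omono f (set zs) \<Longrightarrow> S2 (map f zs) \<longleftrightarrow> S2 zs"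
proof (cases zs rule: S2.cases)
  case (1 a b r)
  assume "omono f (set zs)"
  then have "omono f (set (b # a # r))" using 1 omono_subset[of f "set zs" "set (b # a # r)"] by auto
  then show ?thesis using 1 omono_sorted_lt[of f "b # a # r"] by simp
qed auto

lemma omonoD: "omono f X \<Longrightarrow> a \<in> X \<Longrightarrow> b \<in> X \<Longrightarrow> (a < b \<longleftrightarrow> f a < f b)"
  unfolding omono_def by blast

lemma omono_inj: "omono f X \<Longrightarrow> inj_on f X"
proof (rule inj_onI)
  fix x y assume m: "omono f X" and xy: "x \<in> X" "y \<in> X" "f x = f y"
  show "x = y"
  proof (rule ccontr)
    assume "x \<noteq> y"
    then have "x < y \<or> y < x" by auto
    then show False using m xy unfolding omono_def by auto
  qed
qed

lemma omono_inc: "omono f (set xs) \<Longrightarrow> inc k (map f xs) \<longleftrightarrow> inc k xs"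
proof
  assume m: "omono f (set xs)"
  assume "inc k (map f xs)"
  then obtain ys where "subseq ys (map f xs)" "length ys = k" "sorted_wrt (<) ys"
    unfolding inc_def by blast
  obtain zs where z: "subseq zs xs" "ys = map f zs" using \<open>subseq ys (map f xs)\<close> by (rule subseq_mapE)
  have "omono f (set zs)" using m subseq_set[OF z(1)] omono_subset by blast
  then show "inc k xs" unfolding inc_def using z \<open>length ys = k\<close> \<open>sorted_wrt (<) ys\<close>
    omono_sorted_lt by auto
next
  assume m: "omono f (set xs)"
  assume "inc k xs"
  then obtain zs where z: "subseq zs xs" "length zs = k" "sorted_wrt (<) zs"
    unfolding inc_def by blast
  have "omono f (set zs)" using m subseq_set[OF z(1)] omono_subset by blast
  then show "inc k (map f xs)" unfolding inc_def using z omono_sorted_lt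
    by (intro exI[of _ "map f zs"]) (auto intro: subseq_map)
qed

lemma omono_sw: "omono f (set xs) \<Longrightarrow> sw k (map f xs) \<longleftrightarrow> sw k xs"
proof
  assume m: "omono f (set xs)"
  assume "sw k (map f xs)"
  then obtain ys where "subseq ys (map f xs)" "length ys = k" "S2 ys"
    unfolding sw_def by blast
  obtain zs where z: "subseq zs xs" "ys = map f zs" using \<open>subseq ys (map f xs)\<close> by (rule subseq_mapE)
  have "omono f (set zs)" using m subseq_set[OF z(1)] omono_subset by blast
  then show "sw k xs" unfolding sw_def using z \<open>length ys = k\<close> \<open>S2 ys\<close>
    omono_S2 by auto
next
  assume m: "omono f (set xs)"
  assume "sw k xs"
  then obtain zs where z: "subseq zs xs" "length zs = k" "S2 zs"
    unfolding sw_def by blast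
  have "omono f (set zs)" using m subseq_set[OF z(1)] omono_subset by blast
  then show "sw k (map f xs)" unfolding sw_def using z omono_S2
    by (intro exI[of _ "map f zs"]) (auto intro: subseq_map)
qed

lemma badE: assumes "bad xs"
  obtains x y c d where "subseq [x,y,c,d] xs" "x < d" "y < d" "d < c" "x \<noteq> y"
  using assms unfolding bad_def by blast

lemma badI: "subseq [x,y,c,d] xs \<Longrightarrow> x < d \<Longrightarrow> y < d \<Longrightarrow> d < c \<Longrightarrow> x \<noteq> y \<Longrightarrow> bad xs"
  unfolding bad_def by blast

lemma omono_bad1: assumes m: "omono f (set xs)" and b: "bad (map f xs)" shows "bad xs"
proof -
  obtain x y c d where h: "subseq [x,y,c,d] (map f xs)" "x < d" "y < d" "d < c" "x \<noteq> y"
    using b by (rule badE)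
  obtain zs where z: "subseq zs xs" "[x,y,c,d] = map f zs" using h(1) by (rule subseq_mapE)
  have "length zs = 4" using arg_cong[OF z(2), of length] by simp
  then obtain x' y' c' d' where zz: "zs = [x',y',c',d']" using len4 by blast
  have mm: "omono f (set zs)" using m subseq_set[OF z(1)] omono_subset by blast
  have fx: "x = f x'" "y = f y'" "c = f c'" "d = f d'" using z(2) zz by auto
  have "x' < d'" using omonoD[OF mm, of x' d'] zz fx h by simp
  moreover have "y' < d'" using omonoD[OF mm, of y' d'] zz fx h by simp
  moreover have "d' < c'" using omonoD[OF mm, of d' c'] zz fx h by simp
  moreover have "x' \<noteq> y'" using fx h by auto
  ultimately show "bad xs" using badI z zz by blast
qed

lemma omono_bad2: assumes m: "omono f (set xs)" and b: "bad xs" shows "bad (map f xs)"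
proof -
  obtain x y c d where h: "subseq [x,y,c,d] xs" "x < d" "y < d" "d < c" "x \<noteq> y"
    using b by (rule badE)
  have mm: "omono f (set [x,y,c,d])" using m subseq_set[OF h(1)] omono_subset by blast
  have "f x < f d" using omonoD[OF mm, of x d] h by simp
  moreover have "f y < f d" using omonoD[OF mm, of y d] h by simp
  moreover have "f d < f c" using omonoD[OF mm, of d c] h by simp
  moreover have "f x \<noteq> f y" using omono_inj[OF mm] h unfolding inj_on_def by auto
  moreover have "subseq [f x, f y, f c, f d] (map f xs)" using subseq_map[OF h(1), of f] by simp
  ultimately show "bad (map f xs)" by (rule badI[rotated])
qed

lemma omono_bad: "omono f (set xs) \<Longrightarrow> bad (map f xs) \<longleftrightarrow> bad xs"
  using omono_bad1[of f xs] omono_bad2[of f xs] by blast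

lemma omono_sch: "omono f (set xs) \<Longrightarrow> sch (map f xs) \<longleftrightarrow> sch xs"
proof -
  assume m: "omono f (set xs)"
  have "distinct (map f xs) \<longleftrightarrow> distinct xs" using omono_inj[OF m] distinct_map[of f xs] by simp
  moreover have "bad (map f xs) \<longleftrightarrow> bad xs" using omono_bad[OF m] .
  ultimately show ?thesis unfolding sch_def by simp
qed

lemma inc_mono: "subseq xs ys \<Longrightarrow> inc k xs \<Longrightarrow> inc k ys"
proof -
  assume h: "subseq xs ys" "inc k xs"
  then obtain zs where z: "subseq zs xs" "length zs = k" "sorted_wrt (<) zs" unfolding inc_def by blast
  have "subseq zs ys" using subseq_order.order_trans[OF z(1) h(1)] .
  then show ?thesis unfolding inc_def using z by blast
qed

lemma sw_mono: "subseq xs ys \<Longrightarrow> sw k xs \<Longrightarrow> sw k ys"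
proof -
  assume h: "subseq xs ys" "sw k xs"
  then obtain zs where z: "subseq zs xs" "length zs = k" "S2 zs" unfolding sw_def by blast
  have "subseq zs ys" using subseq_order.order_trans[OF z(1) h(1)] .
  then show ?thesis unfolding sw_def using z by blast
qed

lemma sub_take_snoc:
  assumes "subseq ys (a @ [M])" "length ys = Suc m"
  shows "subseq (take m ys) a"
proof -
  obtain ys1 ys2 where y: "ys = ys1 @ ys2" "subseq ys1 a" "subseq ys2 [M]"
    using assms(1) by (rule subseq_appendE)
  from subseq_single_cases[OF y(3)] show ?thesis
  proof
    assume "ys2 = []"
    then have "ys = ys1" using y by simp
    have "subseq (take m ys1) ys1" by (rule prefix_imp_subseq[OF take_is_prefix])
    then show ?thesis using \<open>ys = ys1\<close> y(2) subseq_order.order_trans by blast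
  next
    assume "ys2 = [M]"
    then have "length ys1 = m" using y assms(2) by simp
    then have "take m ys = ys1" using y \<open>ys2 = [M]\<close> by simp
    then show ?thesis using y(2) by simp
  qed
qed

lemma inc_dec: "sorted_wrt (>) xs \<Longrightarrow> k \<ge> 2 \<Longrightarrow> \<not> inc k xs"
proof
  assume d: "sorted_wrt (>) xs" and k: "k \<ge> 2" and "inc k xs"
  then obtain ys where y: "subseq ys xs" "length ys = k" "sorted_wrt (<) ys" unfolding inc_def by blast
  then obtain a b r where "ys = a # b # r" using k by (cases ys; cases "tl ys"; auto)
  moreover have "sorted_wrt (>) ys" using subseq_sorted[OF y(1) d] .
  ultimately show False using y(3) by auto
qed

lemma sw_inc: "sorted_wrt (<) xs \<Longrightarrow> \<not> sw k xs"
proof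
  assume d: "sorted_wrt (<) xs" and "sw k xs"
  then obtain ys where y: "subseq ys xs" "S2 ys" unfolding sw_def by blast
  then obtain a b r where ys: "ys = a # b # r" by (cases ys rule: S2.cases) auto
  have "sorted_wrt (<) ys" using subseq_sorted[OF y(1) d] .
  then show False using y(2) ys by auto
qed

lemma sorted_snoc_max: "sorted_wrt (<) ys \<Longrightarrow> \<forall>y\<in>set ys. y < (M::nat) \<Longrightarrow> sorted_wrt (<) (ys @ [M])"
  by (auto simp: sorted_wrt_append)

lemma inc_snoc_max:
  assumes "\<forall>y\<in>set a. y < M"
  shows "inc (Suc m) (a @ [M]) \<longleftrightarrow> inc m a"
proof
  assume "inc (Suc m) (a @ [M])"
  then obtain ys where y: "subseq ys (a @ [M])" "length ys = Suc m" "sorted_wrt (<) ys"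
    unfolding inc_def by blast
  have "subseq (take m ys) a" using sub_take_snoc[OF y(1) y(2)] .
  moreover have "length (take m ys) = m" using y(2) by simp
  moreover have "sorted_wrt (<) (take m ys)" using y(3) by simp
  ultimately show "inc m a" unfolding inc_def by blast
next
  assume "inc m a"
  then obtain ys where y: "subseq ys a" "length ys = m" "sorted_wrt (<) ys"
    unfolding inc_def by blast
  have "subseq (ys @ [M]) (a @ [M])" using y(1) by simp
  moreover have "sorted_wrt (<) (ys @ [M])"
    using sorted_snoc_max[OF y(3)] assms subseq_set[OF y(1)] by blast
  moreover have "length (ys @ [M]) = Suc m" using y(2) by simp
  ultimately show "inc (Suc m) (a @ [M])" unfolding inc_def by blast
qed

lemma S2_take: "S2 ys \<Longrightarrow> m \<ge> 2 \<Longrightarrow> S2 (take m ys)"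
proof -
  assume s: "S2 ys" and m: "m \<ge> 2"
  then obtain a b r where ys: "ys = a # b # r" by (cases ys rule: S2.cases) auto
  obtain m' where m': "m = Suc (Suc m')" using m by (metis add_2_eq_Suc le_Suc_ex)
  have "sorted_wrt (<) (b # a # r)" using s ys by simp
  then have "sorted_wrt (<) (take m (b # a # r))" by simp
  then show ?thesis using ys m' by simp
qed

lemma S2_snoc: "S2 ys \<Longrightarrow> \<forall>y\<in>set ys. y < M \<Longrightarrow> S2 (ys @ [M])"
proof -
  assume s: "S2 ys" and lt: "\<forall>y\<in>set ys. y < M"
  then obtain a b r where ys: "ys = a # b # r" by (cases ys rule: S2.cases) auto
  have "sorted_wrt (<) (b # a # r)" using s ys by simp
  then have "sorted_wrt (<) ((b # a # r) @ [M])" using lt ys by (intro sorted_snoc_max) auto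
  then show ?thesis using ys by simp
qed

lemma sw_snoc_max:
  assumes "\<forall>y\<in>set a. y < M" "m \<ge> 2"
  shows "sw (Suc m) (a @ [M]) \<longleftrightarrow> sw m a"
proof
  assume "sw (Suc m) (a @ [M])"
  then obtain ys where y: "subseq ys (a @ [M])" "length ys = Suc m" "S2 ys"
    unfolding sw_def by blast
  have "subseq (take m ys) a" using sub_take_snoc[OF y(1) y(2)] .
  moreover have "length (take m ys) = m" using y(2) by simp
  moreover have "S2 (take m ys)" using S2_take[OF y(3) assms(2)] .
  ultimately show "sw m a" unfolding sw_def by blast
next
  assume "sw m a"
  then obtain ys where y: "subseq ys a" "length ys = m" "S2 ys"
    unfolding sw_def by blast
  have "subseq (ys @ [M]) (a @ [M])" using y(1) by simp
  moreover have "S2 (ys @ [M])"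
    using S2_snoc[OF y(3)] assms subseq_set[OF y(1)] by blast
  moreover have "length (ys @ [M]) = Suc m" using y(2) by simp
  ultimately show "sw (Suc m) (a @ [M])" unfolding sw_def by blast
qed

lemma sw3_snoc:
  assumes "distinct a" "\<forall>y\<in>set a. y < M"
  shows "sw 3 (a @ [M]) \<longleftrightarrow> \<not> sorted_wrt (<) a"
proof
  assume "sw 3 (a @ [M])"
  then obtain ys where y: "subseq ys (a @ [M])" "length ys = Suc 2" "S2 ys"
    unfolding sw_def by auto
  have t: "subseq (take 2 ys) a" using sub_take_snoc[OF y(1) y(2)] .
  obtain p q r where ys: "ys = p # q # r" using y(3) by (cases ys rule: S2.cases) auto
  have "q < p" using y(3) ys by simp
  have "subseq [p, q] a" using t ys by simp
  show "\<not> sorted_wrt (<) a"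
  proof
    assume "sorted_wrt (<) a"
    then have "sorted_wrt (<) [p, q]" using subseq_sorted[OF \<open>subseq [p,q] a\<close>] by blast
    then show False using \<open>q < p\<close> by simp
  qed
next
  assume "\<not> sorted_wrt (<) a"
  then obtain x y where xy: "subseq [x, y] a" "\<not> x < y" using not_sorted_pair by blast
  have "distinct [x, y]" using subseq_distinct[OF xy(1) assms(1)] .
  then have "y < x" using xy(2) by auto
  have "subseq [x, y, M] (a @ [M])" using xy(1) subseq_append[of "[x,y]" "[M]" a] by simp
  moreover have "x < M" "y < M" using assms(2) subseq_set[OF xy(1)] by auto
  then have "S2 [x, y, M]" using \<open>y < x\<close> by simp
  ultimately show "sw 3 (a @ [M])" unfolding sw_def by (intro exI[of _ "[x,y,M]"]) auto
qed

lemma inc2: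
  assumes "distinct a"
  shows "inc 2 a \<longleftrightarrow> \<not> sorted_wrt (>) a"
proof
  assume "inc 2 a"
  then show "\<not> sorted_wrt (>) a" using inc_dec by blast
next
  assume "\<not> sorted_wrt (>) a"
  then obtain x y where xy: "subseq [x, y] a" "\<not> x > y" using not_sorted_pair by blast
  have "distinct [x, y]" using subseq_distinct[OF xy(1) assms(1)] .
  then have "x < y" using xy(2) by auto
  then show "inc 2 a" unfolding inc_def using xy(1) by (intro exI[of _ "[x,y]"]) auto
qed

lemma inc_Cons_max:
  assumes "\<forall>y\<in>set b. y < M" "k \<ge> 2"
  shows "inc k (M # b) \<longleftrightarrow> inc k b"
proof
  assume "inc k (M # b)"
  then obtain ys where y: "subseq ys (M # b)" "length ys = k" "sorted_wrt (<) ys"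
    unfolding inc_def by blast
  from subseq_Cons_cases[OF y(1)] show "inc k b"
  proof
    assume "\<exists>r. ys = M # r \<and> subseq r b"
    then obtain r where r: "ys = M # r" "subseq r b" by blast
    then obtain z r' where "r = z # r'" using y(2) assms(2) by (cases r) auto
    then have "z \<in> set b" using subseq_set[OF r(2)] by auto
    then have "z < M" using assms(1) by auto
    moreover have "M < z" using y(3) r \<open>r = z # r'\<close> by simp
    ultimately show ?thesis by simp
  next
    assume "subseq ys b"
    then show ?thesis unfolding inc_def using y by blast
  qed
next
  assume "inc k b"
  then obtain ys where y: "subseq ys b" "length ys = k" "sorted_wrt (<) ys"
    unfolding inc_def by blast
  have "subseq ys (M # b)" using y(1) by (rule list_emb_Cons)
  then show "inc k (M # b)" unfolding inc_def using y by blast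
qed

lemma sw_Cons_max:
  assumes "\<forall>y\<in>set b. y < M" "k \<ge> 3"
  shows "sw k (M # b) \<longleftrightarrow> sw k b"
proof
  assume "sw k (M # b)"
  then obtain ys where y: "subseq ys (M # b)" "length ys = k" "S2 ys"
    unfolding sw_def by blast
  from subseq_Cons_cases[OF y(1)] show "sw k b"
  proof
    assume "\<exists>r. ys = M # r \<and> subseq r b"
    then obtain r where r: "ys = M # r" "subseq r b" by blast
    then obtain q z r' where "r = q # z # r'" using y(2) assms(2)
      by (cases r; cases "tl r") auto
    then have "z \<in> set b" using subseq_set[OF r(2)] by auto
    then have "z < M" using assms(1) by auto
    moreover have "M < z" using y(3) r \<open>r = q # z # r'\<close> by simp
    ultimately show ?thesis by simp
  next
    assume "subseq ys b"
    then show ?thesis unfolding sw_def using y by blast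
  qed
next
  assume "sw k b"
  then obtain ys where y: "subseq ys b" "length ys = k" "S2 ys"
    unfolding sw_def by blast
  have "subseq ys (M # b)" using y(1) by (rule list_emb_Cons)
  then show "sw k (M # b)" unfolding sw_def using y by blast
qed

lemma sub_glue1: "subseq (a @ [M]) (a @ M # b)"
  using subseq_append'[of a "[M]" "M # b"] by simp

lemma sub_glue2: "s \<in> set a \<Longrightarrow> subseq (s # b) (a @ M # b)"
proof -
  assume "s \<in> set a"
  then have "subseq [s] a" by (simp add: subseq_singleton_left)
  moreover have "subseq b (M # b)" by (simp add: list_emb_Cons)
  ultimately have "subseq ([s] @ b) (a @ M # b)" by (rule list_emb_append_mono)
  then show ?thesis by simp
qed

lemma sorted_sub_single: "sorted_wrt (<) (l::nat list) \<Longrightarrow> set l \<subseteq> {s} \<Longrightarrow> l = [] \<or> l = [s]"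
proof (cases l)
  case (Cons h t)
  assume "sorted_wrt (<) l" "set l \<subseteq> {s}"
  then have "h = s" "\<forall>x\<in>set t. h < x" "set t \<subseteq> {s}" using Cons by auto
  then have "t = []" by (cases t) auto
  then show ?thesis using Cons \<open>h = s\<close> by simp
qed simp

lemma inc_glue:
  assumes s: "s \<in> set a" and sep: "\<forall>x\<in>set a. x \<noteq> s \<longrightarrow> (\<forall>y\<in>set b. y < x)"
    and mx: "\<forall>y\<in>set a \<union> set b. y < M"
  shows "inc k (a @ M # b) \<longleftrightarrow> inc k (a @ [M]) \<or> inc k (s # b)"
proof
  assume "inc k (a @ M # b)"
  then obtain ys where y: "subseq ys (a @ M # b)" "length ys = k" "sorted_wrt (<) ys"
    unfolding inc_def by blast
  obtain ys1 ys2 where yy: "ys = ys1 @ ys2" "subseq ys1 a" "subseq ys2 (M # b)"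
    using y(1) by (rule subseq_appendE)
  from subseq_Cons_cases[OF yy(3)] show "inc k (a @ [M]) \<or> inc k (s # b)"
  proof
    assume "\<exists>r. ys2 = M # r \<and> subseq r b"
    then obtain r where r: "ys2 = M # r" "subseq r b" by blast
    have "r = []"
    proof (rule ccontr)
      assume "r \<noteq> []"
      then obtain z r' where "r = z # r'" by (cases r) auto
      then have "z \<in> set b" using subseq_set[OF r(2)] by auto
      then have "z < M" using mx by auto
      moreover have "M < z" using y(3) yy(1) r \<open>r = z # r'\<close> by (simp add: sorted_wrt_append)
      ultimately show False by simp
    qed
    then have "subseq ys (a @ [M])" using yy r by simp
    then show ?thesis unfolding inc_def using y by blast
  next
    assume b2: "subseq ys2 b"
    show ?thesis
    proof (cases "ys2 = []")
      case True
      then have "subseq ys (a @ [M])" using yy by (simp add: subseq_rev_drop_many)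
      then show ?thesis unfolding inc_def using y by blast
    next
      case False
      then obtain z r' where z: "ys2 = z # r'" by (cases ys2) auto
      then have zb: "z \<in> set b" using subseq_set[OF b2] by auto
      have "\<forall>x\<in>set ys1. x < z" using y(3) yy(1) z by (simp add: sorted_wrt_append)
      then have "set ys1 \<subseteq> {s}"
      proof (intro subsetI)
        fix x assume "\<forall>x\<in>set ys1. x < z" "x \<in> set ys1"
        then have "x \<in> set a" "x < z" using subseq_set[OF yy(2)] by auto
        show "x \<in> {s}"
        proof (rule ccontr)
          assume "x \<notin> {s}"
          then have "z < x" using sep \<open>x \<in> set a\<close> zb by auto
          then show False using \<open>x < z\<close> by simp
        qed
      qed
      moreover have "sorted_wrt (<) ys1" using y(3) yy(1) by (simp add: sorted_wrt_append)
      ultimately have "ys1 = [] \<or> ys1 = [s]" using sorted_sub_single by blast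
      then have "subseq ys (s # b)" using yy b2 by (auto simp: list_emb_Cons)
      then show ?thesis unfolding inc_def using y by blast
    qed
  qed
next
  assume "inc k (a @ [M]) \<or> inc k (s # b)"
  then show "inc k (a @ M # b)"
  proof
    assume "inc k (a @ [M])" then show ?thesis using inc_mono[OF sub_glue1] by blast
  next
    assume "inc k (s # b)" then show ?thesis using inc_mono[OF sub_glue2[OF s]] by blast
  qed
qed

lemma sw_glue:
  assumes s: "s \<in> set a" and smin: "\<forall>x\<in>set a. s \<le> x"
    and sep: "\<forall>x\<in>set a. x \<noteq> s \<longrightarrow> (\<forall>y\<in>set b. y < x)"
    and mx: "\<forall>y\<in>set a \<union> set b. y < M" and k: "k \<ge> 3"
  shows "sw k (a @ M # b) \<longleftrightarrow> sw k (a @ [M]) \<or> sw k (s # b)"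
proof
  assume "sw k (a @ M # b)"
  then obtain ys where y: "subseq ys (a @ M # b)" "length ys = k" "S2 ys"
    unfolding sw_def by blast
  obtain p q r where ys: "ys = p # q # r" using y(3) by (cases ys rule: S2.cases) auto
  have srt: "sorted_wrt (<) (q # p # r)" using y(3) ys by simp
  have rne: "r \<noteq> []" using y(2) ys k by auto
  obtain ys1 ys2 where yy: "ys = ys1 @ ys2" "subseq ys1 a" "subseq ys2 (M # b)"
    using y(1) by (rule subseq_appendE)
  have "subseq ys (a @ [M]) \<or> subseq ys (s # b)"
  proof (cases ys1)
    case Nil
    then have "subseq ys (M # b)" using yy by simp
    from subseq_Cons_cases[OF this] show ?thesis
    proof
      assume "\<exists>r0. ys = M # r0 \<and> subseq r0 b"
      then obtain r0 where r0: "ys = M # r0" "subseq r0 b" by blast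
      then have "p = M" "r0 = q # r" using ys by auto
      obtain z r' where zr: "r = z # r'" using rne by (cases r) auto
      then have "z \<in> set b" using subseq_set[OF r0(2)] \<open>r0 = q # r\<close> by auto
      then have "z < M" using mx by auto
      moreover have "p < z" using srt zr by simp
      ultimately show ?thesis using \<open>p = M\<close> by simp
    next
      assume "subseq ys b"
      then show ?thesis by (simp add: list_emb_Cons)
    qed
  next
    case (Cons p1 t1)
    show ?thesis
    proof (cases t1)
      case Nil
      then have "p1 = p" "ys2 = q # r" using yy ys Cons by auto
      have pa: "p \<in> set a" using subseq_set[OF yy(2)] Cons \<open>p1 = p\<close> by auto
      from subseq_Cons_cases[OF yy(3)[unfolded \<open>ys2 = q # r\<close>]] show ?thesis
      proof
        assume "\<exists>r0. q # r = M # r0 \<and> subseq r0 b"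
        then have "q = M" by auto
        moreover have "p < M" using mx pa by auto
        moreover have "q < p" using srt by simp
        ultimately show ?thesis by simp
      next
        assume qb: "subseq (q # r) b"
        obtain z r' where zr: "r = z # r'" using rne by (cases r) auto
        then have "z \<in> set b" using subseq_set[OF qb] by auto
        moreover have "p < z" using srt zr by simp
        ultimately have "p = s" using sep pa by fastforce
        then have "subseq ys (s # b)" using ys qb by simp
        then show ?thesis by simp
      qed
    next
      case (Cons q1 r1)
      then have e: "p1 = p" "q1 = q" "r = r1 @ ys2" using yy ys \<open>ys1 = p1 # t1\<close> by auto
      have pa: "p \<in> set a" "q \<in> set a"
        using subseq_set[OF yy(2)] \<open>ys1 = p1 # t1\<close> Cons e by auto
      from subseq_Cons_cases[OF yy(3)] show ?thesis
      proof
        assume "\<exists>r0. ys2 = M # r0 \<and> subseq r0 b"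
        then obtain r0 where r0: "ys2 = M # r0" "subseq r0 b" by blast
        have "r0 = []"
        proof (rule ccontr)
          assume "r0 \<noteq> []"
          then obtain z r' where "r0 = z # r'" by (cases r0) auto
          then have "z \<in> set b" using subseq_set[OF r0(2)] by auto
          then have "z < M" using mx by auto
          moreover have "M < z" using srt e r0 \<open>r0 = z # r'\<close> by (simp add: sorted_wrt_append)
          ultimately show False by simp
        qed
        then have "subseq ys (a @ [M])" using yy r0 by simp
        then show ?thesis by simp
      next
        assume b2: "subseq ys2 b"
        show ?thesis
        proof (cases ys2)
          case Nil
          then have "subseq ys (a @ [M])" using yy by (simp add: subseq_rev_drop_many)
          then show ?thesis by simp
        next
          case (Cons z r')
          then have "z \<in> set b" using subseq_set[OF b2] by auto
          moreover have "p < z" using srt e Cons by (simp add: sorted_wrt_append)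
          ultimately have "p = s" using sep pa by fastforce
          moreover have "q < p" using srt by simp
          moreover have "s \<le> q" using smin pa by auto
          ultimately show ?thesis by simp
        qed
      qed
    qed
  qed
  then show "sw k (a @ [M]) \<or> sw k (s # b)" unfolding sw_def using y by blast
next
  assume "sw k (a @ [M]) \<or> sw k (s # b)"
  then show "sw k (a @ M # b)"
  proof
    assume "sw k (a @ [M])" then show ?thesis using sw_mono[OF sub_glue1] by blast
  next
    assume "sw k (s # b)" then show ?thesis using sw_mono[OF sub_glue2[OF s]] by blast
  qed
qed

lemma split4:
  "ys1 @ ys2 = [x,y,c,d] \<Longrightarrow> (ys1 = [] \<and> ys2 = [x,y,c,d]) \<or> (ys1 = [x] \<and> ys2 = [y,c,d]) \<or>
     (ys1 = [x,y] \<and> ys2 = [c,d]) \<or> (ys1 = [x,y,c] \<and> ys2 = [d]) \<or> (ys1 = [x,y,c,d] \<and> ys2 = [])"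
  by (cases ys1; cases "tl ys1"; cases "tl (tl ys1)"; cases "tl (tl (tl ys1))"; auto)

lemma sch_sep:
  assumes sc: "sch (a @ M # b)" and mx: "\<forall>y\<in>set a \<union> set b. y < M"
    and s: "s \<in> set a" and smin: "\<forall>x\<in>set a. s \<le> x"
  shows "\<forall>x\<in>set a. x \<noteq> s \<longrightarrow> (\<forall>y\<in>set b. y < x)"
proof (intro ballI impI)
  fix x y assume x: "x \<in> set a" "x \<noteq> s" and y: "y \<in> set b"
  show "y < x"
  proof (rule ccontr)
    assume "\<not> y < x"
    moreover have "x \<noteq> y" using sc x y unfolding sch_def by auto
    ultimately have xy: "x < y" by auto
    have sx: "s < x" using smin x by fastforce
    have my: "subseq [M, y] (M # b)" using y by (simp add: subseq_singleton_left)
    have sy: "s < y" using sx xy by simp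
    have "\<exists>u v. subseq [u, v] a \<and> u < y \<and> v < y \<and> u \<noteq> v"
    proof (cases "subseq [s, x] a")
      case True
      then show ?thesis using sy xy x(2) by blast
    next
      case False
      then have "subseq [x, s] a" using two_elems[OF s x(1)] x(2) by auto
      then show ?thesis using sy xy x(2) by blast
    qed
    then obtain u v where uv: "subseq [u, v] a" "u < y" "v < y" "u \<noteq> v" by blast
    have "subseq ([u, v] @ [M, y]) (a @ M # b)" using list_emb_append_mono[OF uv(1) my] .
    then have "subseq [u, v, M, y] (a @ M # b)" by simp
    moreover have "y < M" using mx y by auto
    ultimately have "bad (a @ M # b)" using uv by (intro badI) auto
    then show False using sc unfolding sch_def by simp
  qed
qed

lemma glue_sch:
  assumes sa: "sch a" and sb: "sch (s # b)" and s: "s \<in> set a"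
    and sep: "\<forall>x\<in>set a. x \<noteq> s \<longrightarrow> (\<forall>y\<in>set b. y < x)"
    and mx: "\<forall>y\<in>set a \<union> set b. y < M" and dis: "distinct (a @ M # b)"
  shows "sch (a @ M # b)"
proof -
  have small: "x = s" if "x \<in> set a" "d \<in> set b" "x < d" for x d
    using sep that by fastforce
  have "\<not> bad (a @ M # b)"
  proof
    assume "bad (a @ M # b)"
    then obtain x y c d where h: "subseq [x,y,c,d] (a @ M # b)" "x < d" "y < d" "d < c" "x \<noteq> y"
      by (rule badE)
    obtain ys1 ys2 where yy: "[x,y,c,d] = ys1 @ ys2" "subseq ys1 a" "subseq ys2 (M # b)"
      using h(1) by (rule subseq_appendE)
    have nba: "\<not> bad a" and nbb: "\<not> bad (s # b)" using sa sb unfolding sch_def by auto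
    from split4[OF yy(1)[symmetric]] show False
    proof (elim disjE conjE)
      assume e: "ys1 = []" "ys2 = [x,y,c,d]"
      from subseq_Cons_cases[OF yy(3)[unfolded e]] show False
      proof
        assume "\<exists>r. [x,y,c,d] = M # r \<and> subseq r b"
        then have "x = M" "subseq [y,c,d] b" by auto
        then have "d \<in> set b" using subseq_set by fastforce
        then have "d < M" using mx by blast
        then show False using h(2) \<open>x = M\<close> by simp
      next
        assume "subseq [x,y,c,d] b"
        then have "subseq [x,y,c,d] (s # b)" by (rule list_emb_Cons)
        then have "bad (s # b)" using h(2-5) by (rule badI)
        then show False using nbb by simp
      qed
    next
      assume e: "ys1 = [x]" "ys2 = [y,c,d]"
      have xa: "x \<in> set a" using subseq_set[OF yy(2)] e by auto
      from subseq_Cons_cases[OF yy(3)[unfolded e]] show False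
      proof
        assume "\<exists>r. [y,c,d] = M # r \<and> subseq r b"
        then have "y = M" "subseq [c,d] b" by auto
        then have "d \<in> set b" using subseq_set by fastforce
        then have "d < M" using mx by blast
        then show False using h(3) \<open>y = M\<close> by simp
      next
        assume yb: "subseq [y,c,d] b"
        then have "d \<in> set b" using subseq_set by fastforce
        then have "x = s" using small xa h(2) by blast
        have "subseq [x,y,c,d] (s # b)" using yb \<open>x = s\<close> by simp
        then have "bad (s # b)" using h(2-5) by (rule badI)
        then show False using nbb by simp
      qed
    next
      assume e: "ys1 = [x,y]" "ys2 = [c,d]"
      have xa: "x \<in> set a" "y \<in> set a" using subseq_set[OF yy(2)] e by auto
      have "d \<in> set b"
      proof -
        from subseq_Cons_cases[OF yy(3)[unfolded e]] show ?thesis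
        proof
          assume "\<exists>r. [c,d] = M # r \<and> subseq r b"
          then have "subseq [d] b" by auto
          then show ?thesis using subseq_set by fastforce
        next
          assume "subseq [c,d] b"
          then show ?thesis using subseq_set by fastforce
        qed
      qed
      then have "x = s" "y = s" using small xa h(2,3) by blast+
      then show False using h(5) by simp
    next
      assume e: "ys1 = [x,y,c]" "ys2 = [d]"
      have xa: "x \<in> set a" "y \<in> set a" "c \<in> set a" using subseq_set[OF yy(2)] e by auto
      from subseq_Cons_cases[OF yy(3)[unfolded e]] show False
      proof
        assume "\<exists>r. [d] = M # r \<and> subseq r b"
        then have "d = M" by auto
        moreover have "c < M" using mx xa by blast
        ultimately show False using h(4) by simp
      next
        assume "subseq [d] b"
        then have "d \<in> set b" using subseq_set by fastforce
        then have "x = s" "y = s" using small xa h(2,3) by blast+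
        then show False using h(5) by simp
      qed
    next
      assume e: "ys1 = [x,y,c,d]" "ys2 = []"
      then have "subseq [x,y,c,d] a" using yy(2) by simp
      then have "bad a" using h(2-5) by (rule badI)
      then show False using nba by simp
    qed
  qed
  then show ?thesis using dis unfolding sch_def by simp
qed

definition gl :: "nat list \<Rightarrow> nat \<Rightarrow> nat list \<Rightarrow> nat \<Rightarrow> nat list" where
  "gl a' M c' s = map (\<lambda>x. if x = s then hd c' else x) a' @ M # tl c'"

fun om :: "nat \<Rightarrow> nat list \<Rightarrow> nat list" where
  "om 0 xs = xs"
| "om (Suc n) xs = (if xs = [] then [] else
     (let M = Max (set xs); a = takeWhile (\<lambda>x. x \<noteq> M) xs; b = tl (dropWhile (\<lambda>x. x \<noteq> M) xs) in
      if sorted_wrt (>) xs then sort xs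
      else if b = [] \<and> sorted_wrt (>) a then M # sort a
      else if a = [] then M # om n b
      else gl (om n a) M (om n (Min (set a) # b)) (Min (set a))))"

lemma om_split:
  assumes d: "distinct (a @ M # b)" and mx: "\<forall>y\<in>set a \<union> set b. y < M"
  shows "om (Suc n) (a @ M # b) = (if sorted_wrt (>) (a @ M # b) then sort (a @ M # b)
      else if b = [] \<and> sorted_wrt (>) a then M # sort a
      else if a = [] then M # om n b
      else gl (om n a) M (om n (Min (set a) # b)) (Min (set a)))"
proof -
  have mxa: "\<forall>y\<in>set a. y < M" and mxb: "\<forall>y\<in>set b. y < M" using mx by auto
  have mm: "Max (set (a @ M # b)) = M"
  proof (rule Max_eqI)
    fix y assume "y \<in> set (a @ M # b)"
    then have "y \<in> set a \<or> y = M \<or> y \<in> set b" by auto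
    then show "y \<le> M" using mxa mxb by (metis less_imp_le order_refl)
  qed auto
  have na: "\<And>x. x \<in> set a \<Longrightarrow> x \<noteq> M" using d by auto
  have tw: "takeWhile (\<lambda>x. x \<noteq> M) (a @ M # b) = a"
    using takeWhile_append2[of a "\<lambda>x. x \<noteq> M" "M # b"] na by simp
  have dw: "dropWhile (\<lambda>x. x \<noteq> M) (a @ M # b) = M # b"
    using dropWhile_append2[of a "\<lambda>x. x \<noteq> M" "M # b"] na by simp
  show ?thesis by (simp only: om.simps mm tw dw Let_def list.sel(3)) simp
qed

lemma decomp:
  assumes "xs \<noteq> []" "distinct xs"
  obtains a b where "xs = a @ Max (set xs) # b" "distinct (a @ Max (set xs) # b)"
    "\<forall>y\<in>set a \<union> set b. y < Max (set xs)"
proof -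
  define M where "M = Max (set xs)"
  have "M \<in> set xs" using assms M_def by simp
  then obtain a b where ab: "xs = a @ M # b" by (meson split_list)
  have d: "distinct (a @ M # b)" using assms(2) ab by simp
  have "\<forall>y\<in>set a \<union> set b. y < M"
  proof
    fix y assume y: "y \<in> set a \<union> set b"
    then have "y \<in> set xs" unfolding ab by auto
    then have "y \<le> M" unfolding M_def by simp
    moreover have "y \<noteq> M" using d y by auto
    ultimately show "y < M" by simp
  qed
  then show ?thesis using that ab d unfolding M_def by metis
qed

lemma bad_sorted: "sorted_wrt (<) xs \<Longrightarrow> \<not> bad xs"
proof
  assume s: "sorted_wrt (<) xs" and bb: "bad xs"
  from bb obtain x y c d where h: "subseq [x,y,c,d] xs" "x < d" "y < d" "d < c" "x \<noteq> y"
    by (rule badE)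
  have "sorted_wrt (<) [x,y,c,d]" using subseq_sorted[OF h(1) s] .
  then show False using h(4) by simp
qed

lemma bad_Cons_max: "\<forall>y\<in>set l. y < M \<Longrightarrow> bad (M # l) \<Longrightarrow> bad l"
proof -
  assume mx: "\<forall>y\<in>set l. y < M" and bb: "bad (M # l)"
  from bb obtain x y c d where h: "subseq [x,y,c,d] (M # l)" "x < d" "y < d" "d < c" "x \<noteq> y"
    by (rule badE)
  from subseq_Cons_cases[OF h(1)] show "bad l"
  proof
    assume "\<exists>r. [x,y,c,d] = M # r \<and> subseq r l"
    then have "x = M" "subseq [y,c,d] l" by auto
    then have "d \<in> set l" using subseq_set by fastforce
    then have "d < M" using mx by blast
    then show ?thesis using h(2) \<open>x = M\<close> by simp
  next
    assume "subseq [x,y,c,d] l"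
    then show "bad l" using h(2-5) by (rule badI)
  qed
qed

lemma sch_Nil: "sch []"
  unfolding sch_def bad_def by simp

lemma distinct_same: "set R = set xs \<Longrightarrow> length R = length xs \<Longrightarrow> distinct xs \<Longrightarrow> distinct R"
  by (metis card_distinct distinct_card)

lemma dec_unique:
  fixes xs ys :: "nat list"
  assumes "sorted_wrt (>) xs" "sorted_wrt (>) ys" "set xs = set ys"
  shows "xs = ys"
proof -
  have "sorted_wrt (<) (rev xs)" "sorted_wrt (<) (rev ys)" using assms by (simp_all add: sorted_wrt_rev)
  then have "sorted (rev xs)" "distinct (rev xs)" "sorted (rev ys)" "distinct (rev ys)"
    by (simp_all add: strict_sorted_iff)
  moreover have "set (rev xs) = set (rev ys)" using assms by simp
  ultimately have "rev xs = rev ys" using sorted_distinct_set_unique by blast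
  then show ?thesis by simp
qed

definition gd :: "nat list \<Rightarrow> nat list \<Rightarrow> bool" where
  "gd R xs \<longleftrightarrow> set R = set xs \<and> length R = length xs \<and> sch R \<and>
     (sorted_wrt (<) R \<longleftrightarrow> sorted_wrt (>) xs) \<and> (\<forall>k\<ge>3. inc k xs \<longleftrightarrow> sw k R)"

lemma c1_good:
  assumes sc: "sch xs" and d: "sorted_wrt (>) xs"
  shows "gd (sort xs) xs"
proof -
  have dx: "distinct xs" using sc unfolding sch_def by simp
  have s1: "sorted_wrt (<) (sort xs)" using dx by (simp add: strict_sorted_iff)
  have "sch (sort xs)" unfolding sch_def using dx bad_sorted[OF s1] by simp
  moreover have "\<forall>k\<ge>3. inc k xs \<longleftrightarrow> sw k (sort xs)"
    using inc_dec[OF d] sw_inc[OF s1] by auto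
  ultimately show ?thesis unfolding gd_def using s1 d by (simp add: length_sort)
qed

lemma c2_good:
  assumes sc: "sch (a @ [M])" and mx: "\<forall>y\<in>set a. y < M" and n1: "\<not> sorted_wrt (>) (a @ [M])"
    and d: "sorted_wrt (>) a"
  shows "gd (M # sort a) (a @ [M])"
proof -
  have ne: "a \<noteq> []" using n1 by auto
  have dx: "distinct (a @ [M])" using sc unfolding sch_def by simp
  have s1: "sorted_wrt (<) (sort a)" using dx by (simp add: strict_sorted_iff)
  have mx': "\<forall>y\<in>set (sort a). y < M" using mx by simp
  have "\<not> bad (M # sort a)" using bad_Cons_max[OF mx'] bad_sorted[OF s1] by blast
  then have "sch (M # sort a)" unfolding sch_def using dx by auto
  moreover have "\<not> sorted_wrt (<) (M # sort a)"
  proof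
    assume "sorted_wrt (<) (M # sort a)"
    then have "\<forall>y\<in>set a. M < y" by simp
    then show False using ne mx by (metis all_not_in_conv less_asym set_empty)
  qed
  moreover have "\<forall>k\<ge>3. inc k (a @ [M]) \<longleftrightarrow> sw k (M # sort a)"
  proof (intro allI impI)
    fix k :: nat assume k: "k \<ge> 3"
    then obtain m where m: "k = Suc m" "m \<ge> 2" by (metis Suc_le_D Suc_le_mono numeral_3_eq_3 numeral_2_eq_2)
    have "inc k (a @ [M]) \<longleftrightarrow> inc m a" using inc_snoc_max[OF mx] m by simp
    moreover have "\<not> inc m a" using inc_dec[OF d m(2)] .
    moreover have "sw k (M # sort a) \<longleftrightarrow> sw k (sort a)" using sw_Cons_max[OF mx' k] .
    moreover have "\<not> sw k (sort a)" using sw_inc[OF s1] .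
    ultimately show "inc k (a @ [M]) \<longleftrightarrow> sw k (M # sort a)" by simp
  qed
  ultimately show ?thesis unfolding gd_def using n1 by (auto simp: length_sort)
qed

lemma c3_good:
  assumes g: "gd b' b" and sc: "sch (M # b)" and mx: "\<forall>y\<in>set b. y < M"
    and n1: "\<not> sorted_wrt (>) (M # b)"
  shows "gd (M # b') (M # b)"
proof -
  have sb: "set b' = set b" "length b' = length b" "sch b'" and st: "\<forall>k\<ge>3. inc k b \<longleftrightarrow> sw k b'"
    using g unfolding gd_def by auto
  have ne: "b \<noteq> []" using n1 by auto
  then have ne': "b' \<noteq> []" using sb(2) by auto
  have mx': "\<forall>y\<in>set b'. y < M" using mx sb(1) by simp
  have dx: "distinct (M # b)" using sc unfolding sch_def by simp
  have "distinct (M # b')" using dx sb distinct_same[of b' b] sch_def by auto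
  moreover have "\<not> bad (M # b')" using bad_Cons_max[OF mx'] sb(3) unfolding sch_def by blast
  ultimately have "sch (M # b')" unfolding sch_def by simp
  moreover have "\<not> sorted_wrt (<) (M # b')"
  proof
    assume "sorted_wrt (<) (M # b')"
    then have "\<forall>y\<in>set b'. M < y" by simp
    then show False using ne' mx' by (metis all_not_in_conv less_asym set_empty)
  qed
  moreover have "\<forall>k\<ge>3. inc k (M # b) \<longleftrightarrow> sw k (M # b')"
  proof (intro allI impI)
    fix k :: nat assume k: "k \<ge> 3"
    have "inc k (M # b) \<longleftrightarrow> inc k b" using inc_Cons_max[OF mx] k by simp
    also have "\<dots> \<longleftrightarrow> sw k b'" using st k by simp
    also have "\<dots> \<longleftrightarrow> sw k (M # b')" using sw_Cons_max[OF mx' k] by simp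
    finally show "inc k (M # b) \<longleftrightarrow> sw k (M # b')" .
  qed
  ultimately show ?thesis unfolding gd_def using n1 sb by auto
qed

lemma c4_good:
  assumes ga: "gd a' a" and gc: "gd c' (s # b)" and sc: "sch (a @ M # b)"
    and mx: "\<forall>y\<in>set a \<union> set b. y < M" and ne: "a \<noteq> []" and smin: "s = Min (set a)"
    and n1: "\<not> sorted_wrt (>) (a @ M # b)" and n2: "\<not> (b = [] \<and> sorted_wrt (>) a)"
  shows "gd (gl a' M c' s) (a @ M # b)"
proof -
  have sa_in: "s \<in> set a" using ne smin by simp
  have s_le: "\<forall>x\<in>set a. s \<le> x" using smin by simp
  have sep: "\<forall>x\<in>set a. x \<noteq> s \<longrightarrow> (\<forall>y\<in>set b. y < x)"
    using sch_sep[OF sc mx sa_in s_le] .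
  have mxa: "\<forall>y\<in>set a. y < M" and mxb: "\<forall>y\<in>set b. y < M" using mx by auto
  have dis: "distinct (a @ M # b)" using sc unfolding sch_def by simp
  have sub_a: "subseq a (a @ M # b)" by (simp add: subseq_rev_drop_many)
  have sch_a: "sch a" using sch_subseq[OF sub_a sc] .
  have da: "distinct a" using sch_a unfolding sch_def by simp
  have a1: "set a' = set a" "length a' = length a" "sch a'"
     and a2: "sorted_wrt (<) a' \<longleftrightarrow> sorted_wrt (>) a" and a3: "\<forall>k\<ge>3. inc k a \<longleftrightarrow> sw k a'"
    using ga unfolding gd_def by auto
  have c1: "set c' = insert s (set b)" "length c' = Suc (length b)" "sch c'"
     and c3: "\<forall>k\<ge>3. inc k (s # b) \<longleftrightarrow> sw k c'"
    using gc unfolding gd_def by auto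
  define h where "h = hd c'"
  define t where "t = tl c'"
  have ct: "c' = h # t" unfolding h_def t_def using c1(2) by (cases c') auto
  have ht: "insert h (set t) = insert s (set b)" using c1(1) ct by simp
  have h_in: "h \<in> insert s (set b)" using ht by blast
  have bigz: "h < z \<and> s < z" if "z \<in> set a" "z \<noteq> s" for z
  proof -
    have "s < z" using s_le that by fastforce
    moreover have "h < z"
    proof (cases "h = s")
      case True then show ?thesis using \<open>s < z\<close> by simp
    next
      case False then have "h \<in> set b" using h_in by simp
      then show ?thesis using sep that by blast
    qed
    ultimately show ?thesis by simp
  qed
  define f where "f = (\<lambda>x. if x = s then h else x)"
  have gl_eq: "gl a' M c' s = map f a' @ M # t" unfolding gl_def f_def h_def t_def by simp
  define al where "al = map f a'"
  have omf: "omono f (set a')"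
    unfolding omono_def a1(1)
  proof (intro ballI)
    fix x y assume xy: "x \<in> set a" "y \<in> set a"
    show "x < y \<longleftrightarrow> f x < f y"
    proof (cases "x = s")
      case True
      show ?thesis
      proof (cases "y = s")
        case True then show ?thesis using \<open>x = s\<close> by simp
      next
        case False then show ?thesis using \<open>x = s\<close> bigz[OF xy(2)] unfolding f_def by auto
      qed
    next
      case False
      show ?thesis
      proof (cases "y = s")
        case True then show ?thesis using \<open>x \<noteq> s\<close> bigz[OF xy(1)] unfolding f_def by auto
      next
        case False then show ?thesis using \<open>x \<noteq> s\<close> unfolding f_def by auto
      qed
    qed
  qed
  have set_al: "set al = insert h (set a - {s})"
  proof -
    have "set al = f ` set a" unfolding al_def using a1(1) by simp
    also have "\<dots> = insert h (set a - {s})"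
    proof
      show "f ` set a \<subseteq> insert h (set a - {s})" unfolding f_def by auto
    next
      show "insert h (set a - {s}) \<subseteq> f ` set a"
      proof
        fix x assume "x \<in> insert h (set a - {s})"
        then show "x \<in> f ` set a"
        proof
          assume "x = h" then have "x = f s" unfolding f_def by simp
          then show ?thesis using sa_in by blast
        next
          assume "x \<in> set a - {s}" then have "x = f x" "x \<in> set a" unfolding f_def by auto
          then show ?thesis by (metis imageI)
        qed
      qed
    qed
    finally show ?thesis .
  qed
  have h_al: "h \<in> set al" using set_al by simp
  have al_big: "x \<in> set a \<and> x \<noteq> s" if "x \<in> set al" "x \<noteq> h" for x
    using that set_al by auto
  have set_R: "set (al @ M # t) = set (a @ M # b)"
  proof -
    have "set (al @ M # t) = insert M (insert h (set a - {s}) \<union> set t)" using set_al by auto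
    also have "\<dots> = insert M ((set a - {s}) \<union> insert h (set t))" by auto
    also have "\<dots> = insert M ((set a - {s}) \<union> insert s (set b))" using ht by simp
    also have "\<dots> = set (a @ M # b)" using sa_in by auto
    finally show ?thesis .
  qed
  have len_R: "length (al @ M # t) = length (a @ M # b)"
    unfolding al_def using a1(2) c1(2) ct by simp
  have dR: "distinct (al @ M # t)" using distinct_same[OF set_R len_R dis] .
  have t_sub: "set t \<subseteq> insert s (set b)" using ht by blast
  have mx2: "\<forall>y\<in>set al \<union> set t. y < M"
  proof
    fix y assume "y \<in> set al \<union> set t"
    then have "y \<in> set (al @ M # t)" "y \<noteq> M" using dR by auto
    then have "y \<in> set a \<union> set b" using set_R by auto
    then show "y < M" using mxa mxb by blast
  qed
  have sep2: "\<forall>x\<in>set al. x \<noteq> h \<longrightarrow> (\<forall>y\<in>set t. y < x)"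
  proof (intro ballI impI)
    fix x y assume x: "x \<in> set al" "x \<noteq> h" and y: "y \<in> set t"
    then have xa: "x \<in> set a" "x \<noteq> s" using al_big by auto
    have "y = s \<or> y \<in> set b" using y t_sub by blast
    then show "y < x"
    proof
      assume "y = s" then show ?thesis using bigz[OF xa] by simp
    next
      assume "y \<in> set b" then show ?thesis using sep xa by blast
    qed
  qed
  have hmin: "\<forall>x\<in>set al. h \<le> x"
  proof
    fix x assume x: "x \<in> set al"
    show "h \<le> x"
    proof (cases "x = h")
      case True then show ?thesis by simp
    next
      case False then have "x \<in> set a" "x \<noteq> s" using al_big x by auto
      then show ?thesis using bigz by fastforce
    qed
  qed
  have sch_al: "sch al" unfolding al_def using omono_sch[OF omf] a1(3) by simp
  have sch_c: "sch (h # t)" using c1(3) ct by simp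
  have sch_R: "sch (al @ M # t)" using glue_sch[OF sch_al sch_c h_al sep2 mx2 dR] .
  have nsR: "\<not> sorted_wrt (<) (al @ M # t)"
  proof
    assume sR: "sorted_wrt (<) (al @ M # t)"
    have "t = []"
    proof (rule ccontr)
      assume "t \<noteq> []"
      then obtain y where y: "y \<in> set t" by (cases t) auto
      then have "M < y" using sR by (simp add: sorted_wrt_append)
      moreover have "y < M" using mx2 y by blast
      ultimately show False by simp
    qed
    then have "b = []" using c1(2) ct by simp
    have "sorted_wrt (<) al" using sR by (simp add: sorted_wrt_append)
    then have "sorted_wrt (<) a'" unfolding al_def using omono_sorted_lt[OF omf] by simp
    then have "sorted_wrt (>) a" using a2 by simp
    then show False using n2 \<open>b = []\<close> by simp
  qed
  have stats: "\<forall>k\<ge>3. inc k (a @ M # b) \<longleftrightarrow> sw k (al @ M # t)"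
  proof (intro allI impI)
    fix k :: nat assume k: "k \<ge> 3"
    have e1: "inc k (a @ M # b) \<longleftrightarrow> inc k (a @ [M]) \<or> inc k (s # b)"
      using inc_glue[OF sa_in sep mx] .
    have e2: "sw k (al @ M # t) \<longleftrightarrow> sw k (al @ [M]) \<or> sw k (h # t)"
      using sw_glue[OF h_al hmin sep2 mx2 k] .
    have e3: "inc k (s # b) \<longleftrightarrow> sw k (h # t)" using c3 k ct by simp
    obtain m where m: "k = Suc m" "m \<ge> 2" using k by (metis Suc_le_D Suc_le_mono numeral_3_eq_3 numeral_2_eq_2)
    have mxal: "\<forall>y\<in>set al. y < M" using mx2 by blast
    have e4: "inc k (a @ [M]) \<longleftrightarrow> inc m a" using inc_snoc_max[OF mxa] m by simp
    have e5: "inc m a \<longleftrightarrow> sw k (al @ [M])"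
    proof (cases "m = 2")
      case True
      have dal: "distinct al" using sch_al unfolding sch_def by simp
      have "inc m a \<longleftrightarrow> \<not> sorted_wrt (>) a" using inc2[OF da] True by simp
      also have "\<dots> \<longleftrightarrow> \<not> sorted_wrt (<) a'" using a2 by simp
      also have "\<dots> \<longleftrightarrow> \<not> sorted_wrt (<) al" unfolding al_def using omono_sorted_lt[OF omf] by simp
      also have "\<dots> \<longleftrightarrow> sw 3 (al @ [M])" using sw3_snoc[OF dal mxal] by simp
      finally show ?thesis using m True by simp
    next
      case False
      then have m3: "m \<ge> 3" using m by simp
      have "inc m a \<longleftrightarrow> sw m a'" using a3 m3 by simp
      also have "\<dots> \<longleftrightarrow> sw m al" unfolding al_def using omono_sw[OF omf] by simp
      also have "\<dots> \<longleftrightarrow> sw (Suc m) (al @ [M])" using sw_snoc_max[OF mxal m(2)] by simp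
      finally show ?thesis using m by simp
    qed
    show "inc k (a @ M # b) \<longleftrightarrow> sw k (al @ M # t)" using e1 e2 e3 e4 e5 by blast
  qed
  show ?thesis unfolding gd_def gl_eq al_def[symmetric]
    using set_R len_R sch_R nsR n1 stats by simp
qed

declare om.simps(2)[simp del]

lemma inc_Nil: "k \<ge> 1 \<Longrightarrow> \<not> inc k []"
  unfolding inc_def by (auto dest: list_emb_Nil2)

lemma sw_Nil: "\<not> sw k []"
  unfolding sw_def by (auto dest: list_emb_Nil2)

lemma gd_Nil: "gd [] []"
  unfolding gd_def using sch_Nil inc_Nil sw_Nil by auto

lemma om_main: "\<forall>xs. length xs \<le> n \<longrightarrow> sch xs \<longrightarrow> gd (om n xs) xs"
proof (induction n)
  case 0
  show ?case using gd_Nil by simp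
next
  case (Suc n)
  show ?case
  proof (intro allI impI)
    fix xs :: "nat list" assume len: "length xs \<le> Suc n" and sc: "sch xs"
    show "gd (om (Suc n) xs) xs"
    proof (cases "xs = []")
      case True then show ?thesis using gd_Nil by (simp add: om.simps(2))
    next
      case False
      have dx: "distinct xs" using sc unfolding sch_def by simp
      define M where "M = Max (set xs)"
      obtain a b where ab: "xs = a @ M # b" and d: "distinct (a @ M # b)"
        and mx: "\<forall>y\<in>set a \<union> set b. y < M"
        using decomp[OF False dx] unfolding M_def by metis
      have mxa: "\<forall>y\<in>set a. y < M" and mxb: "\<forall>y\<in>set b. y < M" using mx by auto
      have os: "om (Suc n) xs = (if sorted_wrt (>) (a @ M # b) then sort (a @ M # b)
          else if b = [] \<and> sorted_wrt (>) a then M # sort a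
          else if a = [] then M # om n b
          else gl (om n a) M (om n (Min (set a) # b)) (Min (set a)))"
        unfolding ab using om_split[OF d mx] .
      show ?thesis
      proof (cases "sorted_wrt (>) (a @ M # b)")
        case True
        have "om (Suc n) xs = sort xs" using os ab by (simp only: if_P[OF True])
        then show ?thesis using c1_good[OF sc] True ab by simp
      next
        case n1: False
        show ?thesis
        proof (cases "b = [] \<and> sorted_wrt (>) a")
          case True
          then have "xs = a @ [M]" using ab by simp
          have "om (Suc n) xs = M # sort a" using os by (simp only: if_not_P[OF n1] if_P[OF True])
          then show ?thesis using n1 True c2_good[of a M] sc mxa ab by simp
        next
          case n2: False
          show ?thesis
          proof (cases "a = []")
            case True
            have sb: "sch b" using sch_subseq[of b xs] sc ab True by (simp add: list_emb_Cons)
            have "length b \<le> n" using len ab True by simp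
            then have "gd (om n b) b" using Suc.IH sb by blast
            then have "gd (M # om n b) (M # b)" using c3_good[of "om n b" b M] sc ab True mxb n1 by simp
            moreover have "om (Suc n) xs = M # om n b"
              using os by (simp only: if_not_P[OF n1] if_not_P[OF n2] if_P[OF True])
            ultimately show ?thesis using ab True by simp
          next
            case ne: False
            define s where "s = Min (set a)"
            have sa: "s \<in> set a" using ne s_def by simp
            have sch_a: "sch a" using sch_subseq[of a xs] sc ab by (simp add: subseq_rev_drop_many)
            have sch_sb: "sch (s # b)" using sch_subseq[OF sub_glue2[OF sa]] sc ab by simp
            have la: "length a \<le> n" using len ab by simp
            have lb: "length (s # b) \<le> n" using len ab ne by (cases a) auto
            have ga: "gd (om n a) a" using Suc.IH la sch_a by blast
            have gc: "gd (om n (s # b)) (s # b)" using Suc.IH lb sch_sb by blast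
            have "gd (gl (om n a) M (om n (s # b)) s) (a @ M # b)"
              using c4_good[OF ga gc _ mx ne s_def n1 n2] sc ab by simp
            moreover have "om (Suc n) xs = gl (om n a) M (om n (s # b)) s"
              using os unfolding s_def by (simp only: if_not_P[OF n1] if_not_P[OF n2] if_not_P[OF ne])
            ultimately show ?thesis using ab by simp
          qed
        qed
      qed
    qed
  qed
qed

lemma c4_facts:
  assumes ga: "gd a' a" and gc: "gd c' (s # b)" and sc: "sch (a @ M # b)"
    and mx: "\<forall>y\<in>set a \<union> set b. y < M" and ne: "a \<noteq> []" and smin: "s = Min (set a)"
  defines "f \<equiv> (\<lambda>x. if x = s then hd c' else x)"
  shows "hd c' \<in> set (map f a')" "\<forall>x\<in>set (map f a'). hd c' \<le> x"
    "set a - {s} = set (map f a') - {hd c'}" "inj_on f (set a')" "c' = hd c' # tl c'" "s \<in> set a"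
proof -
  have sa_in: "s \<in> set a" using ne smin by simp
  then show "s \<in> set a" .
  have s_le: "\<forall>x\<in>set a. s \<le> x" using smin by simp
  have sep: "\<forall>x\<in>set a. x \<noteq> s \<longrightarrow> (\<forall>y\<in>set b. y < x)"
    using sch_sep[OF sc mx sa_in s_le] .
  have a1: "set a' = set a"
    using ga unfolding gd_def by auto
  have c1: "set c' = insert s (set b)" "length c' = Suc (length b)"
    using gc unfolding gd_def by auto
  define h where "h = hd c'"
  define t where "t = tl c'"
  have ct: "c' = h # t" unfolding h_def t_def using c1(2) by (cases c') auto
  then show "c' = hd c' # tl c'" unfolding h_def t_def .
  have ht: "insert h (set t) = insert s (set b)" using c1(1) ct by simp
  have h_in: "h \<in> insert s (set b)" using ht by blast
  have bigz: "h < z \<and> s < z" if "z \<in> set a" "z \<noteq> s" for z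
  proof -
    have "s < z" using s_le that by fastforce
    moreover have "h < z"
    proof (cases "h = s")
      case True then show ?thesis using \<open>s < z\<close> by simp
    next
      case False then have "h \<in> set b" using h_in by simp
      then show ?thesis using sep that by blast
    qed
    ultimately show ?thesis by simp
  qed
  have fdef: "f = (\<lambda>x. if x = s then h else x)" unfolding f_def h_def ..
  have omf: "omono f (set a')"
    unfolding omono_def a1
  proof (intro ballI)
    fix x y assume xy: "x \<in> set a" "y \<in> set a"
    show "x < y \<longleftrightarrow> f x < f y"
    proof (cases "x = s")
      case True
      show ?thesis
      proof (cases "y = s")
        case True then show ?thesis using \<open>x = s\<close> by simp
      next
        case False then show ?thesis using \<open>x = s\<close> bigz[OF xy(2)] unfolding fdef by auto
      qed
    next
      case False
      show ?thesis
      proof (cases "y = s")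
        case True then show ?thesis using \<open>x \<noteq> s\<close> bigz[OF xy(1)] unfolding fdef by auto
      next
        case False then show ?thesis using \<open>x \<noteq> s\<close> unfolding fdef by auto
      qed
    qed
  qed
  then show "inj_on f (set a')" by (rule omono_inj)
  define al where "al = map f a'"
  have set_al: "set al = insert h (set a - {s})"
  proof -
    have "set al = f ` set a" unfolding al_def using a1 by simp
    also have "\<dots> = insert h (set a - {s})"
    proof
      show "f ` set a \<subseteq> insert h (set a - {s})" unfolding fdef by auto
    next
      show "insert h (set a - {s}) \<subseteq> f ` set a"
      proof
        fix x assume "x \<in> insert h (set a - {s})"
        then show "x \<in> f ` set a"
        proof
          assume "x = h" then have "x = f s" unfolding fdef by simp
          then show ?thesis using sa_in by blast
        next
          assume "x \<in> set a - {s}" then have "x = f x" "x \<in> set a" unfolding fdef by auto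
          then show ?thesis by (metis imageI)
        qed
      qed
    qed
    finally show ?thesis .
  qed
  show "hd c' \<in> set (map f a')" using set_al unfolding al_def h_def by simp
  have hnot: "h \<notin> set a - {s}" using bigz by blast
  show "set a - {s} = set (map f a') - {hd c'}"
    using set_al hnot unfolding al_def h_def by auto
  show "\<forall>x\<in>set (map f a'). hd c' \<le> x"
  proof
    fix x assume x: "x \<in> set (map f a')"
    show "hd c' \<le> x"
    proof (cases "x = h")
      case True then show ?thesis unfolding h_def by simp
    next
      case False then have "x \<in> set a" "x \<noteq> s" using set_al x unfolding al_def by auto
      then show ?thesis using bigz unfolding h_def by fastforce
    qed
  qed
qed

lemma om_gd: "length xs \<le> n \<Longrightarrow> sch xs \<Longrightarrow> gd (om n xs) xs"
  using om_main by blast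

lemma om_case4_hd:
  assumes sc: "sch (a @ M # b)" and mx: "\<forall>y\<in>set a \<union> set b. y < M"
    and len: "length (a @ M # b) \<le> Suc n" and ne: "a \<noteq> []"
    and eq: "om (Suc n) (a @ M # b) = gl (om n a) M (om n (Min (set a) # b)) (Min (set a))"
  shows "hd (om (Suc n) (a @ M # b)) \<noteq> M"
proof -
  have g: "gd (om (Suc n) (a @ M # b)) (a @ M # b)" using om_gd[OF len sc] .
  then have "sch (om (Suc n) (a @ M # b))" unfolding gd_def by simp
  then have dO: "distinct (om (Suc n) (a @ M # b))" unfolding sch_def by simp
  have sch_a: "sch a" using sch_subseq[of a "a @ M # b"] sc by (simp add: subseq_rev_drop_many)
  have "length (om n a) = length a" using om_gd[of a n] sch_a len unfolding gd_def by simp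
  then obtain z zs where z: "om n a = z # zs" using ne by (cases "om n a") auto
  define f where "f = (\<lambda>x. if x = Min (set a) then hd (om n (Min (set a) # b)) else x)"
  have "om (Suc n) (a @ M # b) = f z # (map f zs @ M # tl (om n (Min (set a) # b)))"
    using eq z unfolding gl_def f_def by simp
  then show ?thesis using dO by auto
qed

lemma om_inj:
  "\<forall>xs ys. length xs \<le> n \<longrightarrow> sch xs \<longrightarrow> sch ys \<longrightarrow> set ys = set xs \<longrightarrow> om n ys = om n xs \<longrightarrow> ys = xs"
proof (induction n)
  case 0
  show ?case by auto
next
  case (Suc n)
  show ?case
  proof (intro allI impI)
    fix xs ys :: "nat list"
    assume len: "length xs \<le> Suc n" and sx: "sch xs" and sy: "sch ys" and st: "set ys = set xs"
      and oe: "om (Suc n) ys = om (Suc n) xs"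
    show "ys = xs"
    proof (cases "xs = []")
      case True then show ?thesis using st by simp
    next
      case False
      have dx: "distinct xs" using sx unfolding sch_def by simp
      have dy: "distinct ys" using sy unfolding sch_def by simp
      have ly: "length ys = length xs" using dx dy st by (metis distinct_card)
      have yne: "ys \<noteq> []" using False st by auto
      define M where "M = Max (set xs)"
      have MY: "Max (set ys) = M" using st M_def by simp
      obtain a1 b1 where ab1: "xs = a1 @ M # b1" and d1: "distinct (a1 @ M # b1)"
        and mx1: "\<forall>y\<in>set a1 \<union> set b1. y < M"
        using decomp[OF False dx] unfolding M_def by metis
      obtain a2 b2 where ab2: "ys = a2 @ M # b2" and d2: "distinct (a2 @ M # b2)"
        and mx2: "\<forall>y\<in>set a2 \<union> set b2. y < M"
        using decomp[OF yne dy] unfolding MY by metis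
      define Oo where "Oo = om (Suc n) xs"
      have oy: "om (Suc n) ys = Oo" using oe Oo_def by simp
      have gx: "gd Oo xs" using om_gd[OF len sx] Oo_def by simp
      have gy: "gd Oo ys" using om_gd[of ys "Suc n"] len ly sy oy by simp
      have os1: "Oo = (if sorted_wrt (>) (a1 @ M # b1) then sort (a1 @ M # b1)
          else if b1 = [] \<and> sorted_wrt (>) a1 then M # sort a1
          else if a1 = [] then M # om n b1
          else gl (om n a1) M (om n (Min (set a1) # b1)) (Min (set a1)))"
        unfolding Oo_def ab1 using om_split[OF d1 mx1] .
      have os2: "Oo = (if sorted_wrt (>) (a2 @ M # b2) then sort (a2 @ M # b2)
          else if b2 = [] \<and> sorted_wrt (>) a2 then M # sort a2
          else if a2 = [] then M # om n b2
          else gl (om n a2) M (om n (Min (set a2) # b2)) (Min (set a2)))"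
        using oy unfolding ab2 using om_split[OF d2 mx2] by simp
      have sc1: "sch (a1 @ M # b1)" using sx ab1 by simp
      have sc2: "sch (a2 @ M # b2)" using sy ab2 by simp
      have len1: "length (a1 @ M # b1) \<le> Suc n" using len ab1 by simp
      have len2: "length (a2 @ M # b2) \<le> Suc n" using len ly ab2 by simp
      show ?thesis
      proof (cases "sorted_wrt (>) xs")
        case True
        then have "sorted_wrt (<) Oo" using gx unfolding gd_def by simp
        then have sy': "sorted_wrt (>) ys" using gy unfolding gd_def by simp
        show ?thesis using dec_unique[OF sy' True st] .
      next
        case n1: False
        then have "\<not> sorted_wrt (<) Oo" using gx unfolding gd_def by simp
        then have n1y: "\<not> sorted_wrt (>) ys" using gy unfolding gd_def by simp
        have n1a: "\<not> sorted_wrt (>) (a1 @ M # b1)" using n1 ab1 by simp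
        have n1b: "\<not> sorted_wrt (>) (a2 @ M # b2)" using n1y ab2 by simp
        have O1: "Oo = (if b1 = [] \<and> sorted_wrt (>) a1 then M # sort a1
          else if a1 = [] then M # om n b1
          else gl (om n a1) M (om n (Min (set a1) # b1)) (Min (set a1)))"
          using os1 by (simp only: if_not_P[OF n1a])
        have O2: "Oo = (if b2 = [] \<and> sorted_wrt (>) a2 then M # sort a2
          else if a2 = [] then M # om n b2
          else gl (om n a2) M (om n (Min (set a2) # b2)) (Min (set a2)))"
          using os2 by (simp only: if_not_P[OF n1b])
        have K3_1: "\<not> sorted_wrt (<) (om n b1)" if "a1 = []"
        proof -
          have "sch b1" using sch_subseq[of b1 "a1 @ M # b1"] sc1 that by (simp add: list_emb_Cons)
          moreover have "length b1 \<le> n" using len1 that by simp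
          ultimately have "gd (om n b1) b1" using om_gd by blast
          moreover have "\<not> sorted_wrt (>) b1" using n1a that mx1 by auto
          ultimately show ?thesis unfolding gd_def by simp
        qed
        have K3_2: "\<not> sorted_wrt (<) (om n b2)" if "a2 = []"
        proof -
          have "sch b2" using sch_subseq[of b2 "a2 @ M # b2"] sc2 that by (simp add: list_emb_Cons)
          moreover have "length b2 \<le> n" using len2 that by simp
          ultimately have "gd (om n b2) b2" using om_gd by blast
          moreover have "\<not> sorted_wrt (>) b2" using n1b that mx2 by auto
          ultimately show ?thesis unfolding gd_def by simp
        qed
        have K4_1: "hd Oo \<noteq> M" if "\<not> (b1 = [] \<and> sorted_wrt (>) a1)" "a1 \<noteq> []"
        proof -
          have "Oo = gl (om n a1) M (om n (Min (set a1) # b1)) (Min (set a1))"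
            using O1 by (simp only: if_not_P[OF that(1)] if_not_P[OF that(2)])
          then show ?thesis using om_case4_hd[OF sc1 mx1 len1 that(2)] Oo_def ab1 by simp
        qed
        have K4_2: "hd Oo \<noteq> M" if "\<not> (b2 = [] \<and> sorted_wrt (>) a2)" "a2 \<noteq> []"
        proof -
          have "Oo = gl (om n a2) M (om n (Min (set a2) # b2)) (Min (set a2))"
            using O2 by (simp only: if_not_P[OF that(1)] if_not_P[OF that(2)])
          then show ?thesis using om_case4_hd[OF sc2 mx2 len2 that(2)] oy ab2 by simp
        qed
        show ?thesis
        proof (cases "b1 = [] \<and> sorted_wrt (>) a1")
          case P1: True
          have Oe1: "Oo = M # sort a1" using O1 by (simp only: if_P[OF P1])
          show ?thesis
          proof (cases "b2 = [] \<and> sorted_wrt (>) a2")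
            case P2: True
            have "Oo = M # sort a2" using O2 by (simp only: if_P[OF P2])
            then have "sort a1 = sort a2" using Oe1 by simp
            then have "set a1 = set a2" by (metis set_sort)
            then have "a1 = a2" using dec_unique P1 P2 by blast
            then show ?thesis using ab1 ab2 P1 P2 by simp
          next
            case nP2: False
            show ?thesis
            proof (cases "a2 = []")
              case True
              have "Oo = M # om n b2" using O2 by (simp only: if_not_P[OF nP2] if_P[OF True])
              then have "om n b2 = sort a1" using Oe1 by simp
              moreover have "sorted_wrt (<) (sort a1)" using d1 by (simp add: strict_sorted_iff)
              ultimately show ?thesis using K3_2[OF True] by simp
            next
              case False
              then show ?thesis using K4_2[OF nP2 False] Oe1 by simp
            qed
          qed
        next
          case nP1: False
          show ?thesis
          proof (cases "b2 = [] \<and> sorted_wrt (>) a2")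
            case P2: True
            have Oe2: "Oo = M # sort a2" using O2 by (simp only: if_P[OF P2])
            show ?thesis
            proof (cases "a1 = []")
              case True
              have "Oo = M # om n b1" using O1 by (simp only: if_not_P[OF nP1] if_P[OF True])
              then have "om n b1 = sort a2" using Oe2 by simp
              moreover have "sorted_wrt (<) (sort a2)" using d2 by (simp add: strict_sorted_iff)
              ultimately show ?thesis using K3_1[OF True] by simp
            next
              case False
              then show ?thesis using K4_1[OF nP1 False] Oe2 by simp
            qed
          next
            case nP2: False
            show ?thesis
            proof (cases "a1 = []")
              case A1: True
              have Oe1: "Oo = M # om n b1" using O1 by (simp only: if_not_P[OF nP1] if_P[OF A1])
              show ?thesis
              proof (cases "a2 = []")
                case A2: True
                have "Oo = M # om n b2" using O2 by (simp only: if_not_P[OF nP2] if_P[OF A2])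
                then have oeb: "om n b2 = om n b1" using Oe1 by simp
                have "set b2 = set b1"
                proof -
                  have "set b1 = set xs - {M}" using ab1 A1 d1 by auto
                  moreover have "set b2 = set ys - {M}" using ab2 A2 d2 by auto
                  ultimately show ?thesis using st by simp
                qed
                moreover have "length b1 \<le> n" using len1 A1 by simp
                moreover have "sch b1" using sch_subseq[of b1 "a1 @ M # b1"] sc1 A1 by (simp add: list_emb_Cons)
                moreover have "sch b2" using sch_subseq[of b2 "a2 @ M # b2"] sc2 A2 by (simp add: list_emb_Cons)
                ultimately have "b2 = b1" using Suc.IH oeb by blast
                then show ?thesis using ab1 ab2 A1 A2 by simp
              next
                case False
                then show ?thesis using K4_2[OF nP2 False] Oe1 by simp
              qed
            next
              case A1: False
              show ?thesis
              proof (cases "a2 = []")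
                case A2: True
                have "Oo = M # om n b2" using O2 by (simp only: if_not_P[OF nP2] if_P[OF A2])
                then show ?thesis using K4_1[OF nP1 A1] by simp
              next
                case A2: False
                define s1 where "s1 = Min (set a1)"
                define s2 where "s2 = Min (set a2)"
                have Oe1: "Oo = gl (om n a1) M (om n (s1 # b1)) s1"
                  using O1 unfolding s1_def by (simp only: if_not_P[OF nP1] if_not_P[OF A1])
                have Oe2: "Oo = gl (om n a2) M (om n (s2 # b2)) s2"
                  using O2 unfolding s2_def by (simp only: if_not_P[OF nP2] if_not_P[OF A2])
                have sa1: "s1 \<in> set a1" using A1 s1_def by simp
                have sa2: "s2 \<in> set a2" using A2 s2_def by simp
                have sch_a1: "sch a1" using sch_subseq[of a1 "a1 @ M # b1"] sc1 by (simp add: subseq_rev_drop_many)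
                have sch_a2: "sch a2" using sch_subseq[of a2 "a2 @ M # b2"] sc2 by (simp add: subseq_rev_drop_many)
                have sch_c1: "sch (s1 # b1)" using sch_subseq[OF sub_glue2[OF sa1] sc1] .
                have sch_c2: "sch (s2 # b2)" using sch_subseq[OF sub_glue2[OF sa2] sc2] .
                have la1: "length a1 \<le> n" using len1 by simp
                have la2: "length a2 \<le> n" using len2 by simp
                have lc1: "length (s1 # b1) \<le> n" using len1 A1 by (cases a1) auto
                have lc2: "length (s2 # b2) \<le> n" using len2 A2 by (cases a2) auto
                have ga1: "gd (om n a1) a1" using om_gd[OF la1 sch_a1] .
                have ga2: "gd (om n a2) a2" using om_gd[OF la2 sch_a2] .
                have gc1: "gd (om n (s1 # b1)) (s1 # b1)" using om_gd[OF lc1 sch_c1] .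
                have gc2: "gd (om n (s2 # b2)) (s2 # b2)" using om_gd[OF lc2 sch_c2] .
                define h1 where "h1 = hd (om n (s1 # b1))"
                define h2 where "h2 = hd (om n (s2 # b2))"
                define f1 where "f1 = (\<lambda>x. if x = s1 then h1 else x)"
                define f2 where "f2 = (\<lambda>x. if x = s2 then h2 else x)"
                note F1 = c4_facts[OF ga1 gc1 sc1 mx1 A1 s1_def, folded h1_def, folded f1_def]
                note F2 = c4_facts[OF ga2 gc2 sc2 mx2 A2 s2_def, folded h2_def, folded f2_def]
                have Od1: "Oo = map f1 (om n a1) @ M # tl (om n (s1 # b1))"
                  using Oe1 unfolding gl_def f1_def h1_def by simp
                have Od2: "Oo = map f2 (om n a2) @ M # tl (om n (s2 # b2))"
                  using Oe2 unfolding gl_def f2_def h2_def by simp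
                have "sch Oo" using gx unfolding gd_def by simp
                then have dO: "distinct Oo" unfolding sch_def by simp
                have M1: "M \<notin> set (map f1 (om n a1))" using dO Od1 by auto
                have M2: "M \<notin> set (tl (om n (s1 # b1)))" using dO Od1 by auto
                have eqs: "map f1 (om n a1) = map f2 (om n a2) \<and> tl (om n (s1 # b1)) = tl (om n (s2 # b2))"
                  using Od1 Od2 append_Cons_eq_iff[OF M1 M2, of "map f2 (om n a2)" "tl (om n (s2 # b2))"] by simp
                have e0: "map f1 (om n a1) = map f2 (om n a2)" using eqs by simp
                have "h2 \<in> set (map f1 (om n a1))" unfolding e0 by (rule F2(1))
                then have "h1 \<le> h2" using F1(2) by blast
                moreover have "h1 \<in> set (map f2 (om n a2))" unfolding e0[symmetric] by (rule F1(1))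
                then have "h2 \<le> h1" using F2(2) by blast
                ultimately have hh: "h1 = h2" by simp
                have ceq: "om n (s2 # b2) = om n (s1 # b1)"
                  using F1(5) F2(5) eqs hh unfolding h1_def h2_def by metis
                have "set (s2 # b2) = set (s1 # b1)"
                  using gc1 gc2 ceq unfolding gd_def by metis
                then have "s2 # b2 = s1 # b1" using Suc.IH lc1 sch_c1 sch_c2 ceq by blast
                then have ss: "s2 = s1" and bb: "b2 = b1" by auto
                have "set a1 - {s1} = set a2 - {s2}" using F1(3) F2(3) eqs hh by simp
                then have sa: "set a2 = set a1" using sa1 sa2 ss by blast
                have ff: "f2 = f1" unfolding f1_def f2_def ss hh by (rule refl)
                have sa1': "set (om n a1) = set a1" "set (om n a2) = set a2"
                  using ga1 ga2 unfolding gd_def by auto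
                have "inj_on f1 (set (om n a1) \<union> set (om n a2))" using F1(4) sa1' sa by simp
                then have "om n a1 = om n a2" using eqs ff inj_on_map_eq_map by metis
                then have "a2 = a1" using Suc.IH la1 sch_a1 sch_a2 sa by metis
                then show ?thesis using ab1 ab2 bb by simp
              qed
            qed
          qed
        qed
      qed
    qed
  qed
qed

lemma schroeder_iff: "pi \<in> schroeder n \<longleftrightarrow> set pi = {1..n} \<and> sch pi"
  unfolding schroeder_def perms_def sch_def using schroeder_avoid_iff[of pi] by auto

theorem corollary3p4:
  fixes n :: nat
  assumes "n \<ge> 1"
  shows "\<exists>\<omega>. bij_betw \<omega> (schroeder n) (schroeder n) \<and>
           (\<forall>k \<ge> 3. \<forall>pi \<in> schroeder n.
              avoids pi (incr_pat k) \<longleftrightarrow> avoids (\<omega> pi) (swap12_pat k))"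
proof -
  define w where "w = (\<lambda>xs. om (length xs) xs)"
  have g: "gd (w pi) pi" if "pi \<in> schroeder n" for pi
    using om_gd[of pi "length pi"] that unfolding w_def schroeder_iff by simp
  have lenS: "length pi = n" if "pi \<in> schroeder n" for pi
  proof -
    have "set pi = {1..n}" "distinct pi" using that unfolding schroeder_iff sch_def by auto
    then show ?thesis by (metis card_atLeastAtMost diff_Suc_1 distinct_card)
  qed
  have maps: "w pi \<in> schroeder n" if "pi \<in> schroeder n" for pi
    using g[OF that] that unfolding gd_def schroeder_iff by simp
  have inj: "inj_on w (schroeder n)"
  proof (rule inj_onI)
    fix p q assume p: "p \<in> schroeder n" and q: "q \<in> schroeder n" and e: "w p = w q"
    have lp: "length p = n" and lq: "length q = n" using lenS p q by auto
    have "om n q = om n p" using e lp lq unfolding w_def by simp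
    moreover have "sch p" "sch q" "set q = set p" using p q unfolding schroeder_iff by auto
    ultimately show "p = q" using om_inj[of n] lp by (metis order_refl)
  qed
  have fin: "finite (schroeder n)"
  proof (rule finite_subset)
    show "schroeder n \<subseteq> {xs. set xs \<subseteq> {1..n} \<and> length xs = n}"
    proof
      fix x assume x: "x \<in> schroeder n"
      then have "set x = {1..n}" unfolding schroeder_iff by simp
      then show "x \<in> {xs. set xs \<subseteq> {1..n} \<and> length xs = n}" using lenS[OF x] by simp
    qed
    show "finite {xs. set xs \<subseteq> {1..n} \<and> length xs = (n::nat)}"
      by (rule finite_lists_length_eq) simp
  qed
  have "w ` schroeder n = schroeder n"
    using endo_inj_surj[OF fin _ inj] maps by blast
  then have bij: "bij_betw w (schroeder n) (schroeder n)"
    unfolding bij_betw_def using inj by simp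
  have st: "\<forall>k \<ge> 3. \<forall>pi \<in> schroeder n. avoids pi (incr_pat k) \<longleftrightarrow> avoids (w pi) (swap12_pat k)"
  proof (intro allI impI ballI)
    fix k :: nat and pi assume k: "k \<ge> 3" and p: "pi \<in> schroeder n"
    have "inc k pi \<longleftrightarrow> sw k (w pi)" using g[OF p] k unfolding gd_def by simp
    moreover have "k \<ge> 2" using k by simp
    ultimately show "avoids pi (incr_pat k) \<longleftrightarrow> avoids (w pi) (swap12_pat k)"
      unfolding avoids_def using contains_incr contains_swap by simp
  qed
  show ?thesis using bij st by blast
qed

end
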